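(* For a tree $T$ of order $n$, the following statements are equivalent: (a) $\mathrm{diss}(T)=\frac{2n}{3}$; (b) $T\in\mathcal{T}$; (c) $n\equiv 0 \pmod 3$, and for every vertex $y$ of $T$, at most two components of $T-y$ have order not congruent to $0$ modulo $3$.
   Context: A set $D$ of vertices of a graph $G$ is a dissociation set if the induced subgraph $G[D]$ has maximum degree at most $1$; $\mathrm{diss}(G)$ is the maximum cardinality of a dissociation set of $G$. Operation $(O_1)$ applied to a graph $G'$: add three new vertices $u,v,w$ with edges $uv$, $vw$, and one edge from $w$ to some vertex of $G'$ (i.e., attach a new path $P_3$ by an edge at one of its endvertices). Operation $(O_2)$ applied to $G'$: add three new vertices $v,u,u'$ with edges $vu$, $vu'$, and one edge from $v$ to some vertex of $G'$ (i.e., attach a new $P_3$ by an edge at its central vertex). $\mathcal{T}$ is the set of all trees obtained from the path $P_3$ on three vertices by finitely many (possibly zero) applications of $(O_1)$ and $(O_2)$. *)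

theory Defs
  imports Complex_Main
begin

definition graph :: "'a set \<Rightarrow> 'a set set \<Rightarrow> bool" where
  "graph V E \<longleftrightarrow> finite V \<and> (\<forall>e\<in>E. \<exists>a b. e = {a, b} \<and> a \<noteq> b \<and> a \<in> V \<and> b \<in> V)"

definition reach_in :: "'a set set \<Rightarrow> 'a set \<Rightarrow> 'a \<Rightarrow> 'a \<Rightarrow> bool" where
  "reach_in E S = (\<lambda>a b. a \<in> S \<and> b \<in> S \<and> {a, b} \<in> E)\<^sup>*\<^sup>*"

definition connected_graph :: "'a set \<Rightarrow> 'a set set \<Rightarrow> bool" where
  "connected_graph V E \<longleftrightarrow> V \<noteq> {} \<and> (\<forall>a\<in>V. \<forall>b\<in>V. reach_in E V a b)"

definition is_cycle :: "'a set \<Rightarrow> 'a set set \<Rightarrow> 'a list \<Rightarrow> bool" where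
  "is_cycle V E cs \<longleftrightarrow> length cs \<ge> 3 \<and> distinct cs \<and> set cs \<subseteq> V \<and>
     (\<forall>i. Suc i < length cs \<longrightarrow> {cs ! i, cs ! Suc i} \<in> E) \<and> {last cs, hd cs} \<in> E"

definition acyclic_graph :: "'a set \<Rightarrow> 'a set set \<Rightarrow> bool" where
  "acyclic_graph V E \<longleftrightarrow> (\<nexists>cs. is_cycle V E cs)"

definition tree :: "'a set \<Rightarrow> 'a set set \<Rightarrow> bool" where
  "tree V E \<longleftrightarrow> graph V E \<and> connected_graph V E \<and> acyclic_graph V E"

definition dissociation_set :: "'a set \<Rightarrow> 'a set set \<Rightarrow> 'a set \<Rightarrow> bool" where
  "dissociation_set V E D \<longleftrightarrow> D \<subseteq> V \<and> (\<forall>v\<in>D. card {u\<in>D. {u, v} \<in> E} \<le> 1)"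

definition diss :: "'a set \<Rightarrow> 'a set set \<Rightarrow> nat" where
  "diss V E = Max {card D | D. dissociation_set V E D}"

definition components_minus :: "'a set \<Rightarrow> 'a set set \<Rightarrow> 'a \<Rightarrow> 'a set set" where
  "components_minus V E y =
     (\<lambda>x. {z. reach_in E (V - {y}) x z}) ` (V - {y})"

inductive_set calT :: "('a set \<times> 'a set set) set" where
  P3: "\<lbrakk>a \<noteq> b; b \<noteq> c; a \<noteq> c\<rbrakk> \<Longrightarrow> ({a, b, c}, {{a, b}, {b, c}}) \<in> calT"
| O1: "\<lbrakk>(V, E) \<in> calT; u \<notin> V; v \<notin> V; w \<notin> V; u \<noteq> v; v \<noteq> w; u \<noteq> w; x \<in> V\<rbrakk>
       \<Longrightarrow> (V \<union> {u, v, w}, E \<union> {{u, v}, {v, w}, {w, x}}) \<in> calT"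
| O2: "\<lbrakk>(V, E) \<in> calT; v \<notin> V; u \<notin> V; u' \<notin> V; v \<noteq> u; v \<noteq> u'; u \<noteq> u'; x \<in> V\<rbrakk>
       \<Longrightarrow> (V \<union> {v, u, u'}, E \<union> {{v, u}, {v, u'}, {v, x}}) \<in> calT"

end

theory Submission
  imports Defs
begin

definition nb :: "'a set set \<Rightarrow> 'a set \<Rightarrow> 'a \<Rightarrow> 'a set" where
  "nb E S a = {u \<in> S. {a, u} \<in> E}"

definition pth :: "'a set set \<Rightarrow> 'a set \<Rightarrow> 'a list \<Rightarrow> bool" where
  "pth E S cs \<longleftrightarrow> distinct cs \<and> set cs \<subseteq> S \<and> (\<forall>i. Suc i < length cs \<longrightarrow> {cs!i, cs!Suc i} \<in> E)"

definition lf :: "'a set set \<Rightarrow> bool" where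
  "lf E \<longleftrightarrow> (\<forall>a. {a} \<notin> E)"

definition longest :: "'a set set \<Rightarrow> 'a set \<Rightarrow> 'a list \<Rightarrow> bool" where
  "longest E S cs \<longleftrightarrow> pth E S cs \<and> (\<forall>cs'. pth E S cs' \<longrightarrow> length cs' \<le> length cs)"

lemma nb_sym: "u \<in> nb E S a \<Longrightarrow> a \<in> S \<Longrightarrow> a \<in> nb E S u"
  by (auto simp: nb_def insert_commute)

lemma lf_nb: "lf E \<Longrightarrow> a \<notin> nb E S a"
  by (auto simp: nb_def lf_def)

lemma pth_Nil[simp]: "pth E S []" by (simp add: pth_def)

lemma pth_Cons: "pth E S (a # cs) \<longleftrightarrow> a \<in> S \<and> a \<notin> set cs \<and> pth E S cs \<and> (cs \<noteq> [] \<longrightarrow> {a, hd cs} \<in> E)"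
proof
  assume h: "pth E S (a # cs)"
  have "\<forall>i. Suc i < length cs \<longrightarrow> {cs!i, cs!Suc i} \<in> E"
  proof (intro allI impI)
    fix i assume "Suc i < length cs"
    with h have "{(a#cs)!Suc i, (a#cs)!Suc (Suc i)} \<in> E" unfolding pth_def by (metis length_Cons Suc_less_eq)
    then show "{cs!i, cs!Suc i} \<in> E" by simp
  qed
  moreover have "cs \<noteq> [] \<longrightarrow> {a, hd cs} \<in> E"
  proof
    assume "cs \<noteq> []"
    then have "Suc 0 < length (a#cs)" by simp
    then have "{(a#cs)!0, (a#cs)!Suc 0} \<in> E" using h unfolding pth_def by blast
    then show "{a, hd cs} \<in> E" using \<open>cs \<noteq> []\<close> by (simp add: hd_conv_nth)
  qed
  ultimately show "a \<in> S \<and> a \<notin> set cs \<and> pth E S cs \<and> (cs \<noteq> [] \<longrightarrow> {a, hd cs} \<in> E)"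
    using h by (auto simp: pth_def)
next
  assume h: "a \<in> S \<and> a \<notin> set cs \<and> pth E S cs \<and> (cs \<noteq> [] \<longrightarrow> {a, hd cs} \<in> E)"
  have "\<forall>i. Suc i < length (a#cs) \<longrightarrow> {(a#cs)!i, (a#cs)!Suc i} \<in> E"
  proof (intro allI impI)
    fix i assume i: "Suc i < length (a#cs)"
    show "{(a#cs)!i, (a#cs)!Suc i} \<in> E"
    proof (cases i)
      case 0 then show ?thesis using h i by (auto simp: hd_conv_nth)
    next
      case (Suc k) then show ?thesis using h i by (auto simp: pth_def)
    qed
  qed
  then show "pth E S (a # cs)" using h by (auto simp: pth_def)
qed

lemma chord:
  assumes p: "pth E S cs" and ac: "acyclic_graph S E" and ij: "i < j" "j < length cs"
    and e: "{cs!i, cs!j} \<in> E"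
  shows "j = Suc i"
proof (rule ccontr)
  assume "j \<noteq> Suc i"
  with ij have j2: "Suc (Suc i) \<le> j" by simp
  define c where "c = take (j - i + 1) (drop i cs)"
  have len: "length c = j - i + 1" using ij by (simp add: c_def)
  have nth: "\<And>k. k \<le> j - i \<Longrightarrow> c ! k = cs ! (i + k)" using ij by (simp add: c_def)
  have "is_cycle S E c"
    unfolding is_cycle_def
  proof (intro conjI allI impI)
    show "3 \<le> length c" using len j2 by simp
    show "distinct c" using p by (simp add: c_def pth_def)
    show "set c \<subseteq> S" using p unfolding c_def pth_def by (meson order_trans set_drop_subset set_take_subset)
    fix k assume k: "Suc k < length c"
    then have "c ! k = cs ! (i+k)" "c ! Suc k = cs ! Suc (i+k)" using nth len by auto
    moreover have "Suc (i+k) < length cs" using k len ij by simp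
    ultimately show "{c ! k, c ! Suc k} \<in> E" using p by (simp add: pth_def)
  next
    have "c \<noteq> []" using len by auto
    then have "last c = c ! (j - i)" "hd c = c ! 0" using len by (auto simp: last_conv_nth hd_conv_nth)
    then have "last c = cs ! j" "hd c = cs ! i" using nth ij by auto
    then show "{last c, hd c} \<in> E" using e by (simp add: insert_commute)
  qed
  with ac show False by (auto simp: acyclic_graph_def)
qed

lemma pth_len: "pth E S cs \<Longrightarrow> finite S \<Longrightarrow> length cs < Suc (card S)"
  by (metis card_mono distinct_card less_Suc_eq_le pth_def)

lemma longest_ex:
  assumes "finite S" "S \<noteq> {}"
  shows "\<exists>cs. longest E S cs \<and> cs \<noteq> []"
proof -
  obtain a where a: "a \<in> S" using assms by auto
  have "pth E S [a] \<and> [a] \<noteq> []" using a by (simp add: pth_Cons)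
  then obtain cs where "(pth E S cs \<and> cs \<noteq> []) \<and> (\<forall>y. pth E S y \<and> y \<noteq> [] \<longrightarrow> length y \<le> length cs)"
    using ex_has_greatest_nat[of "\<lambda>cs. pth E S cs \<and> cs \<noteq> []" "[a]" length "Suc (card S)"] pth_len[OF _ assms(1)]
    by blast
  then show ?thesis unfolding longest_def by (metis length_0_conv le0)
qed

lemma F1:
  assumes l: "longest E S (a # rest)" and ac: "acyclic_graph S E" and lf: "lf E" and u: "u \<in> nb E S a"
  shows "rest \<noteq> [] \<and> u = hd rest"
proof -
  have p: "pth E S (a # rest)" using l by (simp add: longest_def)
  have "u \<in> set (a # rest)"
  proof (rule ccontr)
    assume "u \<notin> set (a # rest)"
    then have "pth E S (u # a # rest)" using p u by (auto simp: pth_Cons nb_def insert_commute)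
    with l show False by (auto simp: longest_def dest: spec[of _ "u # a # rest"])
  qed
  then obtain j where j: "j < length (a # rest)" "(a # rest) ! j = u" by (metis in_set_conv_nth)
  have "u \<noteq> a" using u lf by (auto simp: nb_def lf_def)
  then have "j \<noteq> 0" using j by (cases j) auto
  moreover have "{(a#rest)!0, (a#rest)!j} \<in> E" using u j by (simp add: nb_def)
  ultimately have "j = 1" using chord[OF p ac, of 0 j] j by simp
  then show ?thesis using j by (cases rest) auto
qed

lemma longest_pth: "longest E S cs \<Longrightarrow> pth E S cs" by (simp add: longest_def)

lemma F2:
  assumes l: "longest E S (a # b # rest)" and ac: "acyclic_graph S E" and lf: "lf E"
    and u: "u \<in> nb E S b" and ua: "u \<noteq> a" and ur: "rest \<noteq> [] \<longrightarrow> u \<noteq> hd rest"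
  shows "nb E S u \<subseteq> {b}"
proof -
  let ?cs = "a # b # rest"
  have p: "pth E S ?cs" using l by (simp add: longest_def)
  have ub: "u \<noteq> b" using u lf by (auto simp: nb_def lf_def)
  have "u \<notin> set ?cs"
  proof
    assume "u \<in> set ?cs"
    then obtain j where j: "j < length ?cs" "?cs ! j = u" by (metis in_set_conv_nth)
    have "j \<noteq> 0" "j \<noteq> 1" using j ua ub by (auto intro: ccontr)
    then have j1: "1 < j" by simp
    have "{?cs!1, ?cs!j} \<in> E" using u j by (simp add: nb_def)
    then have "j = 2" using chord[OF p ac j1 j(1)] by simp
    then show False using j ur by (cases rest) auto
  qed
  then have p2: "pth E S (u # b # rest)" using p u by (auto simp: pth_Cons nb_def insert_commute)
  then have l2: "longest E S (u # b # rest)" using l by (auto simp: longest_def)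
  show ?thesis
  proof
    fix z assume "z \<in> nb E S u"
    from F1[OF l2 ac lf this] show "z \<in> {b}" by simp
  qed
qed

lemma F3:
  assumes l: "longest E S (a # b # c # rest)" and ac: "acyclic_graph S E" and lf: "lf E"
    and w: "w \<in> nb E S c" and wb: "w \<noteq> b" and wr: "rest \<noteq> [] \<longrightarrow> w \<noteq> hd rest"
    and z: "z \<in> nb E S w" and zc: "z \<noteq> c"
  shows "nb E S z \<subseteq> {w}"
proof -
  let ?cs = "a # b # c # rest"
  have p: "pth E S ?cs" using l by (simp add: longest_def)
  have dist: "distinct ?cs" "set ?cs \<subseteq> S" using p by (auto simp: pth_def)
  have na: "nb E S a \<subseteq> {b}" using F1[OF l ac lf] by auto
  have wc: "w \<noteq> c" using w lf by (auto simp: nb_def lf_def)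
  have wS: "w \<in> S" and cS: "c \<in> S" using w dist by (auto simp: nb_def)
  have wa: "w \<noteq> a"
  proof
    assume "w = a"
    then have "c \<in> nb E S a" using nb_sym[OF w cS] by simp
    with na have "c = b" by auto
    with dist show False by simp
  qed
  have wn: "w \<notin> set ?cs"
  proof
    assume "w \<in> set ?cs"
    then obtain j where j: "j < length ?cs" "?cs ! j = w" by (metis in_set_conv_nth)
    have "j \<noteq> 0" "j \<noteq> 1" "j \<noteq> 2" using j wa wb wc by (auto intro: ccontr)
    then have j1: "2 < j" by simp
    have "{?cs!2, ?cs!j} \<in> E" using w j by (simp add: nb_def numeral_2_eq_2)
    then have "j = 3" using chord[OF p ac j1 j(1)] by simp
    then show False using j wr by (cases rest) (auto simp: numeral_3_eq_3)
  qed
  have zw: "z \<noteq> w" using z lf by (auto simp: nb_def lf_def)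
  have zS: "z \<in> S" using z by (simp add: nb_def)
  have za: "z \<noteq> a"
  proof
    assume "z = a"
    then have "w \<in> nb E S a" using nb_sym[OF z wS] by simp
    with na wb show False by auto
  qed
  have zb: "z \<noteq> b"
  proof
    assume "z = b"
    then have wnb: "w \<in> nb E S b" using nb_sym[OF z wS] by simp
    have "nb E S w \<subseteq> {b}"
      using F2[OF l ac lf wnb wa] wc by simp
    moreover have "c \<in> nb E S w" using nb_sym[OF w cS] .
    ultimately show False using dist by auto
  qed
  have p3: "pth E S (w # c # rest)" using p wn w by (auto simp: pth_Cons nb_def insert_commute)
  have zr: "z \<notin> set rest"
  proof
    assume "z \<in> set rest"
    then obtain k where k: "k < length rest" "rest ! k = z" by (metis in_set_conv_nth)
    have "{(w # c # rest) ! 0, (w # c # rest) ! (k+2)} \<in> E" using z k by (simp add: nb_def)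
    from chord[OF p3 ac _ _ this] k show False by simp
  qed
  have zn: "z \<notin> set (w # c # rest)" using zw zc zr by simp
  have p4: "pth E S (z # w # c # rest)" using p3 zn z zS by (auto simp: pth_Cons nb_def insert_commute)
  then have l4: "longest E S (z # w # c # rest)" using l by (auto simp: longest_def)
  show ?thesis
  proof
    fix t assume "t \<in> nb E S z"
    from F1[OF l4 ac lf this] show "t \<in> {w}" by simp
  qed
qed

lemma card_le1: "A \<subseteq> {t} \<Longrightarrow> card A \<le> 1"
  by (metis card.empty card.insert empty_iff finite.intros(1) insert_absorb le_0_eq
      le_numeral_extra(4) subset_singletonD zero_le_one One_nat_def card_1_singleton_iff)

lemma acyc_mono: "acyclic_graph S E \<Longrightarrow> T \<subseteq> S \<Longrightarrow> acyclic_graph T E"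
  by (auto simp: acyclic_graph_def is_cycle_def)

lemma dis_union:
  assumes d: "dissociation_set S' E D'" and Y: "Y \<subseteq> X" "X \<inter> S' = {}"
    and ne: "\<forall>p\<in>Y. \<forall>q\<in>S'. {p,q} \<notin> E" and yi: "\<forall>v\<in>Y. card {u\<in>Y. {u,v}\<in>E} \<le> 1"
  shows "dissociation_set (S' \<union> X) E (D' \<union> Y)"
  unfolding dissociation_set_def
proof (intro conjI ballI)
  show "D' \<union> Y \<subseteq> S' \<union> X" using d Y by (auto simp: dissociation_set_def)
  fix v assume v: "v \<in> D' \<union> Y"
  show "card {u \<in> D' \<union> Y. {u, v} \<in> E} \<le> 1"
  proof (cases "v \<in> D'")
    case True
    then have vS: "v \<in> S'" using d by (auto simp: dissociation_set_def)
    have "{u \<in> D' \<union> Y. {u, v} \<in> E} = {u \<in> D'. {u, v} \<in> E}" using ne vS by auto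
    then show ?thesis using d True by (auto simp: dissociation_set_def)
  next
    case False
    then have vY: "v \<in> Y" using v by auto
    have "\<forall>u\<in>D'. {u, v} \<notin> E"
    proof
      fix u assume "u \<in> D'"
      then have "u \<in> S'" using d by (auto simp: dissociation_set_def)
      then have "{v, u} \<notin> E" using ne vY by auto
      then show "{u, v} \<notin> E" by (simp add: insert_commute)
    qed
    then have "{u \<in> D' \<union> Y. {u, v} \<in> E} = {u \<in> Y. {u, v} \<in> E}" by auto
    then show ?thesis using yi vY by auto
  qed
qed

lemma reduce:
  assumes fin: "finite S" and X: "X \<subseteq> S" and Y: "Y \<subseteq> X"
    and ne: "\<forall>p\<in>Y. \<forall>q\<in>S-X. {p,q} \<notin> E" and yi: "\<forall>v\<in>Y. card {u\<in>Y. {u,v}\<in>E} \<le> 1"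
    and r: "2 * card X \<le> 3 * card Y"
    and IH: "\<exists>D'. dissociation_set (S - X) E D' \<and> 2 * card (S - X) \<le> 3 * card D'"
  shows "\<exists>D. dissociation_set S E D \<and> 2 * card S \<le> 3 * card D"
proof -
  obtain D' where D': "dissociation_set (S - X) E D'" "2 * card (S - X) \<le> 3 * card D'" using IH by blast
  have "dissociation_set ((S - X) \<union> X) E (D' \<union> Y)"
    by (rule dis_union[OF D'(1) Y _ ne yi]) auto
  moreover have "(S - X) \<union> X = S" using X by auto
  moreover have "card (D' \<union> Y) = card D' + card Y"
  proof -
    have "D' \<subseteq> S - X" using D' by (simp add: dissociation_set_def)
    then have "D' \<inter> Y = {}" using Y by auto
    moreover have "finite D'" "finite Y" using \<open>D' \<subseteq> S - X\<close> Y X fin finite_subset by (auto intro: finite_subset)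
    ultimately show ?thesis by (simp add: card_Un_disjoint)
  qed
  moreover have "card S = card (S - X) + card X" using X fin
    by (metis card_Diff_subset finite_subset le_add_diff_inverse2 card_mono)
  ultimately show ?thesis using D'(2) r by (intro exI[of _ "D' \<union> Y"]) auto
qed

lemma L1:
  assumes "finite S" "acyclic_graph S E" "lf E"
  shows "\<exists>D. dissociation_set S E D \<and> 2 * card S \<le> 3 * card D"
  using assms
proof (induction "card S" arbitrary: S rule: less_induct)
  case less
  note fin = less.prems(1) and ac = less.prems(2) and lf = less.prems(3)
  have IH: "\<And>X. X \<subseteq> S \<Longrightarrow> X \<noteq> {} \<Longrightarrow> \<exists>D'. dissociation_set (S - X) E D' \<and> 2 * card (S - X) \<le> 3 * card D'"
  proof -
    fix X assume X: "X \<subseteq> S" "X \<noteq> {}"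
    have "card (S - X) < card S" using X fin
      by (metis Diff_subset card_seteq finite_subset psubsetI subset_Diff_insert Diff_eq_empty_iff
          Diff_disjoint Int_absorb2 psubset_card_mono Diff_cancel)
    then show "\<exists>D'. dissociation_set (S - X) E D' \<and> 2 * card (S - X) \<le> 3 * card D'"
      using less.hyps[of "S - X"] fin ac lf acyc_mono[OF ac, of "S - X"] by auto
  qed
  show ?case
  proof (cases "S = {}")
    case True then show ?thesis by (intro exI[of _ "{}"]) (auto simp: dissociation_set_def)
  next
    case False
    obtain cs where l: "longest E S cs" and cne: "cs \<noteq> []" using longest_ex[OF fin False] by blast
    then obtain a rest where cs: "cs = a # rest" by (cases cs) auto
    have p: "pth E S cs" using l by (simp add: longest_def)
    have aS: "a \<in> S" using p cs by (simp add: pth_Cons)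
    show ?thesis
    proof (cases rest)
      case Nil
      have na: "nb E S a = {}" using F1[OF l[unfolded cs] ac lf] Nil by auto
      show ?thesis
      proof (rule reduce[OF fin _ _ _ _ _ IH, of "{a}" "{a}"])
        show "\<forall>p\<in>{a}. \<forall>q\<in>S - {a}. {p, q} \<notin> E" using na by (auto simp: nb_def)
        show "\<forall>v\<in>{a}. card {u \<in> {a}. {u, v} \<in> E} \<le> 1" by (metis (no_types, lifting) card_le1 mem_Collect_eq singletonD subsetI)
      qed (use aS in auto)
    next
      case (Cons b rest2)
      note l2 = l[unfolded cs Cons]
      have p2: "pth E S (a # b # rest2)" using p cs Cons by simp
      have bS: "b \<in> S" and ab: "a \<noteq> b" and eab: "{a,b} \<in> E" and anr: "a \<notin> set rest2"
        using p2 by (auto simp: pth_Cons)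
      have na: "nb E S a \<subseteq> {b}" using F1[OF l2 ac lf] by auto
      define L where "L = nb E S b - (if rest2 = [] then {} else {hd rest2})"
      have leaves: "\<forall>x\<in>L. nb E S x \<subseteq> {b}"
      proof
        fix x assume x: "x \<in> L"
        show "nb E S x \<subseteq> {b}"
        proof (cases "x = a")
          case True then show ?thesis using na by simp
        next
          case False then show ?thesis using F2[OF l2 ac lf, of x] x by (auto simp: L_def split: if_splits)
        qed
      qed
      have aL: "a \<in> L" using eab aS anr by (auto simp: L_def nb_def insert_commute)
      have bL: "b \<notin> L" using lf_nb[OF lf] by (auto simp: L_def)
      have finL: "finite L" using fin by (auto simp: L_def nb_def)
      have LS: "L \<subseteq> S" by (auto simp: L_def nb_def)
      show ?thesis
      proof (cases "2 \<le> card L")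
        case True
        show ?thesis
        proof (rule reduce[OF fin _ _ _ _ _ IH, of "insert b L" L])
          show "\<forall>p\<in>L. \<forall>q\<in>S - insert b L. {p, q} \<notin> E" using leaves by (auto simp: nb_def)
          show "\<forall>v\<in>L. card {u \<in> L. {u, v} \<in> E} \<le> 1"
          proof
            fix v assume v: "v \<in> L"
            have "{u \<in> L. {u, v} \<in> E} = {}"
            proof (rule ccontr)
              assume "{u \<in> L. {u, v} \<in> E} \<noteq> {}"
              then obtain u where u: "u \<in> L" "{u,v} \<in> E" by auto
              then have "u \<in> nb E S v" using LS by (auto simp: nb_def insert_commute)
              then show False using leaves v u bL by auto
            qed
            then show "card {u \<in> L. {u, v} \<in> E} \<le> 1" by (metis card.empty zero_le_one)
          qed
          show "2 * card (insert b L) \<le> 3 * card L" using True bL finL by simp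
        qed (use bS LS in auto)
      next
        case False
        then have L1: "L = {a}" using aL finL
          by (metis card_1_singleton_iff card_gt_0_iff empty_iff less_2_cases not_le One_nat_def
              card_0_eq insert_absorb singletonD)
        show ?thesis
        proof (cases rest2)
          case Nil
          have nbb: "nb E S b \<subseteq> {a}" using L1 Nil by (simp add: L_def)
          show ?thesis
          proof (rule reduce[OF fin _ _ _ _ _ IH, of "{a,b}" "{a,b}"])
            show "\<forall>p\<in>{a, b}. \<forall>q\<in>S - {a, b}. {p, q} \<notin> E" using na nbb by (auto simp: nb_def)
            show "\<forall>v\<in>{a, b}. card {u \<in> {a, b}. {u, v} \<in> E} \<le> 1"
            proof
              fix v assume "v \<in> {a,b}"
              then show "card {u \<in> {a, b}. {u, v} \<in> E} \<le> 1"
              proof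
                assume "v = a" then show ?thesis using lf by (intro card_le1[of _ b]) (auto simp: lf_def)
              next
                assume "v \<in> {b}" then show ?thesis using lf by (intro card_le1[of _ a]) (auto simp: lf_def)
              qed
            qed
          qed (use aS bS in auto)
        next
          case (Cons c rest3)
          have nbb: "nb E S b \<subseteq> {a, c}" using L1 Cons by (auto simp: L_def)
          have cS: "c \<in> S" using p2 Cons by (simp add: pth_Cons)
          show ?thesis
          proof (rule reduce[OF fin _ _ _ _ _ IH, of "{a,b,c}" "{a,b}"])
            show "\<forall>p\<in>{a, b}. \<forall>q\<in>S - {a, b, c}. {p, q} \<notin> E" using na nbb by (auto simp: nb_def)
            show "\<forall>v\<in>{a, b}. card {u \<in> {a, b}. {u, v} \<in> E} \<le> 1"
            proof
              fix v assume "v \<in> {a,b}"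
              then show "card {u \<in> {a, b}. {u, v} \<in> E} \<le> 1"
              proof
                assume "v = a" then show ?thesis using lf by (intro card_le1[of _ b]) (auto simp: lf_def)
              next
                assume "v \<in> {b}" then show ?thesis using lf by (intro card_le1[of _ a]) (auto simp: lf_def)
              qed
            qed
            have "a \<noteq> c" "b \<noteq> c" using p2 Cons by (auto simp: pth_Cons)
            then show "2 * card {a, b, c} \<le> 3 * card {a, b}" using ab by simp
          qed (use aS bS cS in auto)
        qed
      qed
    qed
  qed
qed

lemma diss_fin: "finite V \<Longrightarrow> finite {card D |D. dissociation_set V E D}"
proof -
  assume f: "finite V"
  have "{card D |D. dissociation_set V E D} \<subseteq> card ` Pow V" by (auto simp: dissociation_set_def)
  then show ?thesis using f finite_subset by blast
qed

lemma diss_ge: "finite V \<Longrightarrow> dissociation_set V E D \<Longrightarrow> card D \<le> diss V E"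
  unfolding diss_def by (rule Max_ge) (auto simp: diss_fin)

lemma diss_ex: "finite V \<Longrightarrow> \<exists>D. dissociation_set V E D \<and> card D = diss V E"
proof -
  assume f: "finite V"
  have "dissociation_set V E {}" by (simp add: dissociation_set_def)
  then have "{card D |D. dissociation_set V E D} \<noteq> {}" by blast
  from Max_in[OF diss_fin[OF f] this] show ?thesis unfolding diss_def by auto
qed

lemma not3:
  assumes "x \<in> D" "y \<in> D" "z \<in> D" "x \<noteq> z" "{x,y} \<in> E" "{y,z} \<in> E" "finite D"
  shows "\<not> dissociation_set V E D"
proof
  assume d: "dissociation_set V E D"
  have "{x,z} \<subseteq> {u\<in>D. {u,y}\<in>E}" using assms by (auto simp: insert_commute)
  then have "card {x,z} \<le> card {u\<in>D. {u,y}\<in>E}" using assms by (intro card_mono) auto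
  moreover have "card {u\<in>D. {u,y}\<in>E} \<le> 1" using d assms by (auto simp: dissociation_set_def)
  ultimately show False using assms by simp
qed

lemma restrictD:
  assumes d: "dissociation_set V' E' D" and fin: "finite D" and E: "E \<subseteq> E'" and V: "V \<subseteq> V'"
  shows "dissociation_set V E (D \<inter> V)"
  unfolding dissociation_set_def
proof (intro conjI ballI)
  show "D \<inter> V \<subseteq> V" by auto
  fix v assume v: "v \<in> D \<inter> V"
  have "card {u \<in> D \<inter> V. {u, v} \<in> E} \<le> card {u\<in>D. {u,v}\<in>E'}"
    using fin E by (intro card_mono) auto
  also have "\<dots> \<le> 1" using d v by (auto simp: dissociation_set_def)
  finally show "card {u \<in> D \<inter> V. {u, v} \<in> E} \<le> 1" .
qed

lemma extendE:
  assumes d: "dissociation_set V E D" and N: "\<forall>e\<in>N. \<not> e \<subseteq> V"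
  shows "dissociation_set V (E \<union> N) D"
proof -
  have "\<And>v. v \<in> D \<Longrightarrow> {u\<in>D. {u,v} \<in> E \<union> N} = {u\<in>D. {u,v}\<in>E}"
    using d N by (auto simp: dissociation_set_def)
  then show ?thesis using d by (simp add: dissociation_set_def)
qed

lemma card_split3:
  assumes "finite D" "D \<subseteq> V \<union> P" "finite P"
  shows "card D \<le> card (D \<inter> V) + card (D \<inter> P)"
proof -
  have "D = (D \<inter> V) \<union> (D \<inter> P)" using assms by auto
  then have "card D = card ((D \<inter> V) \<union> (D \<inter> P))" by simp
  also have "\<dots> \<le> card (D \<inter> V) + card (D \<inter> P)" by (rule card_Un_le)
  finally show ?thesis .
qed

lemma le2of3:
  assumes "finite D" "\<not> {p,q,r} \<subseteq> D"
  shows "card (D \<inter> {p,q,r}) \<le> 2"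
proof -
  obtain t where t: "t \<in> {p,q,r}" "t \<notin> D" using assms by auto
  have "D \<inter> {p,q,r} \<subseteq> {p,q,r} - {t}" using t by auto
  moreover have "card ({p,q,r} - {t}) \<le> 2"
  proof -
    have "card {p,q,r} \<le> 3" by (simp add: card_insert_if)
    then show ?thesis using t by (simp add: card_Diff_singleton)
  qed
  ultimately show ?thesis by (meson card_mono finite.emptyI finite.insertI finite_Diff order_trans)
qed

lemma calT_diss:
  "(V, E) \<in> calT \<Longrightarrow> finite V \<and> (\<forall>e\<in>E. e \<subseteq> V) \<and> 3 * diss V E = 2 * card V"
proof (induction rule: calT.induct)
  case (P3 a b c)
  let ?V = "{a,b,c}" and ?E = "{{a,b},{b,c}}"
  have up: "diss ?V ?E \<le> 2"
  proof -
    have "finite ?V" by simp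
    from diss_ex[OF this, of ?E] obtain D where D: "dissociation_set ?V ?E D" "card D = diss ?V ?E" by blast
    have fD: "finite D" using D unfolding dissociation_set_def by (meson finite.emptyI finite.insertI finite_subset)
    have "\<not> {a,b,c} \<subseteq> D"
    proof
      assume "{a,b,c} \<subseteq> D"
      then have "a \<in> D" "b \<in> D" "c \<in> D" by auto
      from not3[OF this P3(3) _ _ fD, of ?E ?V] D(1) show False by simp
    qed
    then have "card (D \<inter> {a,b,c}) \<le> 2" by (rule le2of3[OF fD])
    moreover have "D \<inter> {a,b,c} = D" using D by (auto simp: dissociation_set_def)
    ultimately show ?thesis using D by simp
  qed
  have lo: "2 \<le> diss ?V ?E"
  proof -
    have "dissociation_set ?V ?E {a,b}"
      unfolding dissociation_set_def
    proof (intro conjI ballI)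
      fix v assume "v \<in> {a,b}"
      then show "card {u \<in> {a, b}. {u, v} \<in> ?E} \<le> 1"
      proof
        assume "v = a" then show ?thesis using P3 by (intro card_le1[of _ b]) (auto simp: doubleton_eq_iff)
      next
        assume "v \<in> {b}" then show ?thesis using P3 by (intro card_le1[of _ a]) (auto simp: doubleton_eq_iff)
      qed
    qed auto
    from diss_ge[OF _ this] show ?thesis using P3 by simp
  qed
  show ?case using up lo P3 by auto
next
  case (O1 V E u v w x)
  let ?V = "V \<union> {u,v,w}" and ?E = "E \<union> {{u,v},{v,w},{w,x}}"
  have fin: "finite V" and EV: "\<forall>e\<in>E. e \<subseteq> V" and dV: "3 * diss V E = 2 * card V" using O1 by auto
  have cV: "card ?V = card V + 3" using O1 fin by simp
  have up: "diss ?V ?E \<le> diss V E + 2"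
  proof -
    obtain D where D: "dissociation_set ?V ?E D" "card D = diss ?V ?E" using diss_ex[of ?V ?E] fin by auto
    have DV: "D \<subseteq> ?V" using D by (simp add: dissociation_set_def)
    have fD: "finite D" using DV fin by (meson finite.emptyI finite.insertI finite_Un finite_subset)
    have "\<not> {u,v,w} \<subseteq> D"
    proof
      assume "{u,v,w} \<subseteq> D"
      then have "u \<in> D" "v \<in> D" "w \<in> D" by auto
      from not3[OF this _ _ _ fD, of ?E ?V] D(1) O1 show False by simp
    qed
    then have "card (D \<inter> {u,v,w}) \<le> 2" by (rule le2of3[OF fD])
    moreover have "card (D \<inter> V) \<le> diss V E"
      using restrictD[OF D(1) fD, of E V] diss_ge[OF fin] by auto
    moreover have "card D \<le> card (D \<inter> V) + card (D \<inter> {u,v,w})" using card_split3[OF fD DV] by simp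
    ultimately show ?thesis using D by simp
  qed
  have lo: "diss V E + 2 \<le> diss ?V ?E"
  proof -
    obtain D where D: "dissociation_set V E D" "card D = diss V E" using diss_ex[of V E] fin by auto
    have D1: "dissociation_set V ?E D" by (rule extendE[OF D(1)]) (use O1 in auto)
    have "dissociation_set (V \<union> {u,v,w}) ?E (D \<union> {u,v})"
    proof (rule dis_union[OF D1])
      show "\<forall>p\<in>{u, v}. \<forall>q\<in>V. {p, q} \<notin> ?E" using O1 EV by (auto simp: doubleton_eq_iff)
      show "\<forall>t\<in>{u, v}. card {s \<in> {u, v}. {s, t} \<in> ?E} \<le> 1"
      proof
        fix t assume "t \<in> {u,v}"
        then show "card {s \<in> {u, v}. {s, t} \<in> ?E} \<le> 1"
        proof
          assume "t = u" then show ?thesis using O1 EV by (intro card_le1[of _ v]) (auto simp: doubleton_eq_iff)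
        next
          assume "t \<in> {v}" then show ?thesis using O1 EV by (intro card_le1[of _ u]) (auto simp: doubleton_eq_iff)
        qed
      qed
    qed (use O1 in auto)
    from diss_ge[OF _ this] have "card (D \<union> {u,v}) \<le> diss ?V ?E" using fin by simp
    moreover have "card (D \<union> {u,v}) = card D + 2"
    proof -
      have "D \<subseteq> V" using D by (simp add: dissociation_set_def)
      then have "finite D" "D \<inter> {u,v} = {}" using fin O1 finite_subset by auto
      then show ?thesis using O1 by (simp add: card_Un_disjoint)
    qed
    ultimately show ?thesis using D by simp
  qed
  show ?case using up lo dV cV fin EV O1 by auto
next
  case (O2 V E v u u' x)
  let ?V = "V \<union> {v,u,u'}" and ?E = "E \<union> {{v,u},{v,u'},{v,x}}"
  have fin: "finite V" and EV: "\<forall>e\<in>E. e \<subseteq> V" and dV: "3 * diss V E = 2 * card V" using O2 by auto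
  have cV: "card ?V = card V + 3" using O2 fin by simp
  have up: "diss ?V ?E \<le> diss V E + 2"
  proof -
    obtain D where D: "dissociation_set ?V ?E D" "card D = diss ?V ?E" using diss_ex[of ?V ?E] fin by auto
    have DV: "D \<subseteq> ?V" using D by (simp add: dissociation_set_def)
    have fD: "finite D" using DV fin by (meson finite.emptyI finite.insertI finite_Un finite_subset)
    have "\<not> {u,v,u'} \<subseteq> D"
    proof
      assume "{u,v,u'} \<subseteq> D"
      then have "u \<in> D" "v \<in> D" "u' \<in> D" by auto
      from not3[OF this _ _ _ fD, of ?E ?V] D(1) O2 show False by (simp add: insert_commute)
    qed
    then have "\<not> {v,u,u'} \<subseteq> D" by auto
    then have "card (D \<inter> {v,u,u'}) \<le> 2" by (rule le2of3[OF fD])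
    moreover have "card (D \<inter> V) \<le> diss V E"
      using restrictD[OF D(1) fD, of E V] diss_ge[OF fin] by auto
    moreover have "card D \<le> card (D \<inter> V) + card (D \<inter> {v,u,u'})" using card_split3[OF fD DV] by simp
    ultimately show ?thesis using D by simp
  qed
  have lo: "diss V E + 2 \<le> diss ?V ?E"
  proof -
    obtain D where D: "dissociation_set V E D" "card D = diss V E" using diss_ex[of V E] fin by auto
    have D1: "dissociation_set V ?E D" by (rule extendE[OF D(1)]) (use O2 in auto)
    have "dissociation_set (V \<union> {v,u,u'}) ?E (D \<union> {u,u'})"
    proof (rule dis_union[OF D1])
      show "\<forall>p\<in>{u, u'}. \<forall>q\<in>V. {p, q} \<notin> ?E" using O2 EV by (auto simp: doubleton_eq_iff)
      show "\<forall>t\<in>{u, u'}. card {s \<in> {u, u'}. {s, t} \<in> ?E} \<le> 1"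
      proof
        fix t assume "t \<in> {u,u'}"
        then show "card {s \<in> {u, u'}. {s, t} \<in> ?E} \<le> 1"
          using O2 EV by (intro card_le1[of _ t]) (auto simp: doubleton_eq_iff)
      qed
    qed (use O2 in auto)
    from diss_ge[OF _ this] have "card (D \<union> {u,u'}) \<le> diss ?V ?E" using fin by simp
    moreover have "card (D \<union> {u,u'}) = card D + 2"
    proof -
      have "D \<subseteq> V" using D by (simp add: dissociation_set_def)
      then have "finite D" "D \<inter> {u,u'} = {}" using fin O2 finite_subset by auto
      then show ?thesis using O2 by (simp add: card_Un_disjoint)
    qed
    ultimately show ?thesis using D by simp
  qed
  show ?case using up lo dV cV fin EV O2 by auto
qed

lemma reach_refl[simp]: "reach_in E S x x" by (simp add: reach_in_def)

lemma reach_step: "a \<in> S \<Longrightarrow> b \<in> S \<Longrightarrow> {a,b} \<in> E \<Longrightarrow> reach_in E S a b"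
  by (simp add: reach_in_def r_into_rtranclp)

lemma reach_trans: "reach_in E S a b \<Longrightarrow> reach_in E S b c \<Longrightarrow> reach_in E S a c"
  unfolding reach_in_def by (rule rtranclp_trans)

lemma reach_sym: "reach_in E S a b \<Longrightarrow> reach_in E S b a"
  unfolding reach_in_def
proof (induction rule: rtranclp_induct)
  case base then show ?case by simp
next
  case (step y z)
  then have "(\<lambda>a b. a \<in> S \<and> b \<in> S \<and> {a, b} \<in> E) z y" by (simp add: insert_commute)
  then show ?case using step(3) by (rule converse_rtranclp_into_rtranclp)
qed

lemma reach_cases: "reach_in E S a b \<Longrightarrow> a = b \<or> (a \<in> S \<and> b \<in> S)"
  unfolding reach_in_def by (induction rule: rtranclp_induct) auto

lemma reach_mono: "S \<subseteq> T \<Longrightarrow> reach_in E S a b \<Longrightarrow> reach_in E T a b"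
  unfolding reach_in_def
proof -
  assume st: "S \<subseteq> T" and r: "(\<lambda>a b. a \<in> S \<and> b \<in> S \<and> {a, b} \<in> E)\<^sup>*\<^sup>* a b"
  from r show "(\<lambda>a b. a \<in> T \<and> b \<in> T \<and> {a, b} \<in> E)\<^sup>*\<^sup>* a b"
  proof (induction rule: rtranclp_induct)
    case base then show ?case by simp
  next
    case (step y z)
    then have "(\<lambda>a b. a \<in> T \<and> b \<in> T \<and> {a, b} \<in> E) y z" using st by auto
    with step(3) show ?case by (rule rtranclp.rtrancl_into_rtrancl)
  qed
qed

lemma reach_closed:
  "reach_in E S a b \<Longrightarrow> a \<in> X \<Longrightarrow> (\<forall>p\<in>X. \<forall>q\<in>S. {p,q} \<in> E \<longrightarrow> q \<in> X) \<Longrightarrow> b \<in> X"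
  unfolding reach_in_def by (induction rule: rtranclp_induct) auto

lemma reach_proj:
  assumes "reach_in E S a b"
    and h: "\<forall>p q. p \<in> S \<longrightarrow> q \<in> S \<longrightarrow> {p,q} \<in> E \<longrightarrow> f p = f q \<or> (f p \<in> S' \<and> f q \<in> S' \<and> {f p, f q} \<in> E)"
  shows "reach_in E S' (f a) (f b)"
  using assms(1) unfolding reach_in_def
proof (induction rule: rtranclp_induct)
  case base then show ?case by simp
next
  case (step y z)
  then have "f y = f z \<or> (f y \<in> S' \<and> f z \<in> S' \<and> {f y, f z} \<in> E)" using h by auto
  then show ?case
  proof
    assume "f y = f z" then show ?thesis using step(3) by simp
  next
    assume "f y \<in> S' \<and> f z \<in> S' \<and> {f y, f z} \<in> E"
    then show ?thesis using step(3) by (simp add: rtranclp.rtrancl_into_rtrancl)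
  qed
qed

lemma reach_restrictE: "S \<subseteq> V' \<Longrightarrow> reach_in {e\<in>E. e \<subseteq> V'} S = reach_in E S"
  unfolding reach_in_def
proof -
  assume "S \<subseteq> V'"
  then have "(\<lambda>a b. a \<in> S \<and> b \<in> S \<and> {a, b} \<in> {e\<in>E. e \<subseteq> V'}) = (\<lambda>a b. a \<in> S \<and> b \<in> S \<and> {a, b} \<in> E)"
    by (auto simp: fun_eq_iff)
  then show "(\<lambda>a b. a \<in> S \<and> b \<in> S \<and> {a, b} \<in> {e\<in>E. e \<subseteq> V'})\<^sup>*\<^sup>* = (\<lambda>a b. a \<in> S \<and> b \<in> S \<and> {a, b} \<in> E)\<^sup>*\<^sup>*"
    by simp
qed

lemma conn_closed:
  assumes "connected_graph V E" "X \<subseteq> V" "x \<in> X" "\<forall>p\<in>X. \<forall>q\<in>V. {p,q} \<in> E \<longrightarrow> q \<in> X"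
  shows "X = V"
proof
  show "V \<subseteq> X"
  proof
    fix z assume "z \<in> V"
    then have "reach_in E V x z" using assms by (auto simp: connected_graph_def)
    from reach_closed[OF this assms(3) assms(4)] show "z \<in> X" .
  qed
qed (use assms in auto)

definition K :: "'a set set \<Rightarrow> 'a set \<Rightarrow> 'a \<Rightarrow> 'a set" where
  "K E S x = {z. reach_in E S x z}"

lemma comps_K: "components_minus V E y = K E (V - {y}) ` (V - {y})"
  by (simp add: components_minus_def K_def[abs_def])

lemma K_self: "x \<in> K E S x" by (simp add: K_def)

lemma K_sub: "x \<in> S \<Longrightarrow> K E S x \<subseteq> S"
proof
  fix z assume "x \<in> S" "z \<in> K E S x"
  then show "z \<in> S" using reach_cases[of E S x z] by (auto simp: K_def)
qed

lemma K_same: "z \<in> K E S x \<Longrightarrow> K E S z = K E S x"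
proof -
  assume "z \<in> K E S x"
  then have xz: "reach_in E S x z" by (simp add: K_def)
  then have zx: "reach_in E S z x" by (rule reach_sym)
  show "K E S z = K E S x"
  proof
    show "K E S z \<subseteq> K E S x"
    proof
      fix w assume "w \<in> K E S z"
      then have "reach_in E S z w" by (simp add: K_def)
      with xz have "reach_in E S x w" by (rule reach_trans)
      then show "w \<in> K E S x" by (simp add: K_def)
    qed
    show "K E S x \<subseteq> K E S z"
    proof
      fix w assume "w \<in> K E S x"
      then have "reach_in E S x w" by (simp add: K_def)
      with zx have "reach_in E S z w" by (rule reach_trans)
      then show "w \<in> K E S z" by (simp add: K_def)
    qed
  qed
qed

lemma K_disj: "K E S x \<noteq> K E S z \<Longrightarrow> K E S x \<inter> K E S z = {}"
proof (rule ccontr)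
  assume ne: "K E S x \<noteq> K E S z" and "K E S x \<inter> K E S z \<noteq> {}"
  then obtain w where w: "w \<in> K E S x" "w \<in> K E S z" by blast
  have "K E S w = K E S x" by (rule K_same[OF w(1)])
  moreover have "K E S w = K E S z" by (rule K_same[OF w(2)])
  ultimately show False using ne by simp
qed

lemma K_closed_eq:
  assumes "x \<in> X" "X \<subseteq> S" "\<forall>p\<in>X. \<forall>q\<in>S. {p,q} \<in> E \<longrightarrow> q \<in> X" "\<forall>z\<in>X. reach_in E S x z"
  shows "K E S x = X"
proof
  show "K E S x \<subseteq> X"
  proof
    fix z assume "z \<in> K E S x"
    then have "reach_in E S x z" by (simp add: K_def)
    from reach_closed[OF this assms(1) assms(3)] show "z \<in> X" .
  qed
  show "X \<subseteq> K E S x" using assms(4) by (auto simp: K_def)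
qed

lemma comps_fin: "finite V \<Longrightarrow> finite (components_minus V E y)"
  by (simp add: comps_K)

lemma comps_sub: "C \<in> components_minus V E y \<Longrightarrow> C \<subseteq> V - {y}"
  unfolding comps_K by (erule imageE) (simp add: K_sub)

lemma comps_Union: "\<Union>(components_minus V E y) = V - {y}"
proof
  show "\<Union>(components_minus V E y) \<subseteq> V - {y}"
  proof
    fix x assume "x \<in> \<Union>(components_minus V E y)"
    then obtain C where C: "C \<in> components_minus V E y" "x \<in> C" by blast
    from comps_sub[OF C(1)] C(2) show "x \<in> V - {y}" by (rule subsetD)
  qed
  show "V - {y} \<subseteq> \<Union>(components_minus V E y)"
  proof
    fix x assume "x \<in> V - {y}"
    have "x \<in> K E (V - {y}) x" by (rule K_self)
    moreover have "K E (V - {y}) x \<in> components_minus V E y"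
      unfolding comps_K using \<open>x \<in> V - {y}\<close> by (rule imageI)
    ultimately show "x \<in> \<Union>(components_minus V E y)" by (rule UnionI[rotated])
  qed
qed

lemma comps_disj: "C1 \<in> components_minus V E y \<Longrightarrow> C2 \<in> components_minus V E y \<Longrightarrow> C1 \<noteq> C2 \<Longrightarrow> C1 \<inter> C2 = {}"
proof -
  assume a: "C1 \<in> components_minus V E y" "C2 \<in> components_minus V E y" "C1 \<noteq> C2"
  then obtain x1 x2 where "C1 = K E (V - {y}) x1" "C2 = K E (V - {y}) x2" unfolding comps_K by blast
  then show "C1 \<inter> C2 = {}" using K_disj[of E "V - {y}" x1 x2] a(3) by simp
qed

lemma comps_sum:
  assumes "finite V"
  shows "(\<Sum>C\<in>components_minus V E y. card C) = card (V - {y})"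
proof -
  have "card (\<Union>(components_minus V E y)) = (\<Sum>C\<in>components_minus V E y. card C)"
  proof (rule card_Union_disjoint)
    show "pairwise disjnt (components_minus V E y)"
      unfolding pairwise_def disjnt_def
    proof (intro ballI impI)
      fix C1 C2 assume "C1 \<in> components_minus V E y" "C2 \<in> components_minus V E y" "C1 \<noteq> C2"
      then show "C1 \<inter> C2 = {}" by (rule comps_disj)
    qed
    fix A assume "A \<in> components_minus V E y"
    then have "A \<subseteq> V - {y}" by (rule comps_sub)
    then show "finite A" using assms by (meson finite_Diff finite_subset)
  qed
  then show ?thesis by (simp add: comps_Union)
qed

lemma comps_mem: "x \<in> V - {y} \<Longrightarrow> K E (V - {y}) x \<in> components_minus V E y"
  by (simp add: comps_K)

definition condc :: "'a set \<Rightarrow> 'a set set \<Rightarrow> bool" where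
  "condc V E \<longleftrightarrow> card V mod 3 = 0 \<and> (\<forall>y\<in>V. card {C \<in> components_minus V E y. card C mod 3 \<noteq> 0} \<le> 2)"

lemma graph_lf: "graph V E \<Longrightarrow> lf E"
  unfolding lf_def
proof (intro allI notI)
  fix x assume g: "graph V E" and x: "{x} \<in> E"
  then obtain a b where ab: "{x} = {a, b}" "a \<noteq> b" unfolding graph_def by blast
  then have "a \<in> {x}" "b \<in> {x}" by auto
  then show False using ab(2) by simp
qed

lemma arith3: "(n::nat) mod 3 = 0 \<Longrightarrow> n \<ge> 1 \<Longrightarrow> n - 1 = 3*k + s \<Longrightarrow> s mod 3 = 2"
  by presburger

lemma arith3b: "(c::nat) mod 3 \<noteq> 0 \<Longrightarrow> 2 * c \<le> 3 * d \<Longrightarrow> 2 * c + 1 \<le> 3 * d"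
  by presburger

lemma sum_two:
  assumes fin: "finite V" and c: "condc V E" and y: "y \<in> V"
    and C: "C1 \<in> components_minus V E y" "C2 \<in> components_minus V E y" "C1 \<noteq> C2"
    and nz: "card C1 mod 3 \<noteq> 0" "card C2 mod 3 \<noteq> 0"
  shows "(card C1 + card C2) mod 3 = 2"
proof -
  let ?C = "components_minus V E y"
  let ?N = "{C \<in> ?C. card C mod 3 \<noteq> 0}"
  have fC: "finite ?C" by (rule comps_fin[OF fin])
  have sub: "{C1, C2} \<subseteq> ?N" using C nz by auto
  have "card ?N \<le> 2" using c y by (simp add: condc_def)
  moreover have "card {C1,C2} = 2" using C by simp
  moreover have "finite ?N" using fC by simp
  ultimately have N: "?N = {C1, C2}" using sub card_seteq[of ?N "{C1,C2}"] by simp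
  have e1: "(\<Sum>C\<in>?C. card C) = (\<Sum>C\<in>?C - ?N. card C) + (\<Sum>C\<in>?N. card C)"
    by (rule sum.subset_diff) (use fC in auto)
  have "3 dvd (\<Sum>C\<in>?C - ?N. card C)" by (rule dvd_sum) auto
  then obtain k where k: "(\<Sum>C\<in>?C - ?N. card C) = 3 * k" by (auto elim: dvdE)
  have e2: "(\<Sum>C\<in>?N. card C) = card C1 + card C2" using N C by simp
  have e3: "(\<Sum>C\<in>?C. card C) = card V - 1" using comps_sum[OF fin] y by simp
  have "card V mod 3 = 0" "card V \<ge> 1" using c y fin by (auto simp: condc_def card_gt_0_iff Suc_le_eq)
  moreover have "card V - 1 = 3 * k + (card C1 + card C2)" using e1 e2 e3 k by simp
  ultimately show ?thesis by (rule arith3)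
qed

lemma a_imp_c:
  assumes t: "tree V E" and a: "3 * diss V E = 2 * card V"
  shows "condc V E"
proof -
  have fin: "finite V" and ac: "acyclic_graph V E"
    using t by (auto simp: tree_def graph_def)
  have lf: "lf E" using t unfolding tree_def by (intro graph_lf[of V]) simp
  have m: "card V mod 3 = 0" using a by presburger
  have "\<forall>y\<in>V. card {C \<in> components_minus V E y. card C mod 3 \<noteq> 0} \<le> 2"
  proof (rule ccontr)
    assume "\<not> ?thesis"
    then obtain y where y: "y \<in> V" and big: "card {C \<in> components_minus V E y. card C mod 3 \<noteq> 0} > 2" by auto
    let ?C = "components_minus V E y"
    let ?N = "{C \<in> ?C. card C mod 3 \<noteq> 0}"
    have fC: "finite ?C" by (rule comps_fin[OF fin])
    have finC: "\<And>C. C \<in> ?C \<Longrightarrow> finite C"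
    proof -
      fix C assume "C \<in> ?C"
      then have "C \<subseteq> V - {y}" by (rule comps_sub)
      then show "finite C" using fin by (meson finite_Diff finite_subset)
    qed
    have "\<forall>C\<in>?C. \<exists>D. dissociation_set C E D \<and> 2 * card C \<le> 3 * card D"
    proof
      fix C assume C: "C \<in> ?C"
      have "C \<subseteq> V" using comps_sub[OF C] by (rule order_trans) auto
      then show "\<exists>D. dissociation_set C E D \<and> 2 * card C \<le> 3 * card D"
        using L1[OF finC[OF C] acyc_mono[OF ac] lf] by blast
    qed
    then obtain f where f: "\<forall>C\<in>?C. dissociation_set C E (f C) \<and> 2 * card C \<le> 3 * card (f C)"
      by metis
    have fsub: "\<And>C. C \<in> ?C \<Longrightarrow> f C \<subseteq> C" using f by (auto simp: dissociation_set_def)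
    have ffin: "\<And>C. C \<in> ?C \<Longrightarrow> finite (f C)" using fsub finC finite_subset by blast
    let ?D = "\<Union>(f ` ?C)"
    have dD: "dissociation_set V E ?D"
      unfolding dissociation_set_def
    proof (intro conjI ballI)
      show "?D \<subseteq> V"
      proof
        fix v assume "v \<in> ?D"
        then obtain C where C: "C \<in> ?C" "v \<in> f C" by auto
        have "f C \<subseteq> C" by (rule fsub[OF C(1)])
        also have "C \<subseteq> V - {y}" by (rule comps_sub[OF C(1)])
        finally show "v \<in> V" using C(2) by auto
      qed
      fix v assume "v \<in> ?D"
      then obtain C where C: "C \<in> ?C" "v \<in> f C" by auto
      have vC: "v \<in> C" using C fsub by auto
      obtain x where x: "x \<in> V - {y}" "C = K E (V - {y}) x" using C(1) by (auto simp: comps_K)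
      have "{u \<in> ?D. {u, v} \<in> E} \<subseteq> {u \<in> f C. {u, v} \<in> E}"
      proof
        fix u assume u: "u \<in> {u \<in> ?D. {u, v} \<in> E}"
        then obtain C' where C': "C' \<in> ?C" "u \<in> f C'" by auto
        have uC': "u \<in> C'" using C' fsub by auto
        have "u \<in> V - {y}" using uC' comps_sub[OF C'(1)] by (rule subsetD[rotated])
        have "v \<in> V - {y}" using vC comps_sub[OF C(1)] by (rule subsetD[rotated])
        with \<open>u \<in> V - {y}\<close> have "reach_in E (V - {y}) v u" using u by (intro reach_step) (auto simp: insert_commute)
        then have "u \<in> K E (V - {y}) v" by (simp add: K_def)
        moreover have "K E (V - {y}) v = C" using K_same[of v E "V - {y}" x] vC x(2) by simp
        ultimately have "u \<in> C" by simp
        then have "C' = C" using comps_disj[OF C'(1) C(1)] uC' by (metis IntI empty_iff)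
        then show "u \<in> {u \<in> f C. {u, v} \<in> E}" using u C' by auto
      qed
      then have "card {u \<in> ?D. {u, v} \<in> E} \<le> card {u \<in> f C. {u, v} \<in> E}"
        using ffin[OF C(1)] by (intro card_mono) auto
      also have "\<dots> \<le> 1" using f C by (auto simp: dissociation_set_def)
      finally show "card {u \<in> ?D. {u, v} \<in> E} \<le> 1" .
    qed
    have cD: "card ?D = (\<Sum>C\<in>?C. card (f C))"
    proof (rule card_UN_disjoint[OF fC])
      show "\<forall>i\<in>?C. finite (f i)" using ffin by blast
      show "\<forall>i\<in>?C. \<forall>j\<in>?C. i \<noteq> j \<longrightarrow> f i \<inter> f j = {}"
      proof (intro ballI impI)
        fix i j assume ij: "i \<in> ?C" "j \<in> ?C" "i \<noteq> j"
        have "i \<inter> j = {}" using ij by (rule comps_disj)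
        then show "f i \<inter> f j = {}" using fsub[OF ij(1)] fsub[OF ij(2)] by auto
      qed
    qed
    have s1: "(\<Sum>C\<in>?C - ?N. 2 * card C) \<le> (\<Sum>C\<in>?C - ?N. 3 * card (f C))"
      using f by (intro sum_mono) auto
    have s2: "(\<Sum>C\<in>?N. 2 * card C + 1) \<le> (\<Sum>C\<in>?N. 3 * card (f C))"
    proof (rule sum_mono)
      fix C assume "C \<in> ?N"
      then have "card C mod 3 \<noteq> 0" "2 * card C \<le> 3 * card (f C)" using f by auto
      then show "2 * card C + 1 \<le> 3 * card (f C)" by (rule arith3b)
    qed
    have s3: "(\<Sum>C\<in>?N. 2 * card C + 1) = (\<Sum>C\<in>?N. 2 * card C) + (\<Sum>C\<in>?N. 1)"
      by (rule sum.distrib)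
    have s4: "(\<Sum>C\<in>?N. (1::nat)) = card ?N" by simp
    have split: "\<And>g. (\<Sum>C\<in>?C. g C) = (\<Sum>C\<in>?C - ?N. g C) + (\<Sum>C\<in>?N. g C)"
      by (rule sum.subset_diff) (use fC in auto)
    have "3 * card ?D = (\<Sum>C\<in>?C. 3 * card (f C))" using cD by (simp add: sum_distrib_left)
    moreover have "(\<Sum>C\<in>?C. 3 * card (f C)) = (\<Sum>C\<in>?C - ?N. 3 * card (f C)) + (\<Sum>C\<in>?N. 3 * card (f C))"
      by (rule split)
    moreover have "(\<Sum>C\<in>?C. 2 * card C) = (\<Sum>C\<in>?C - ?N. 2 * card C) + (\<Sum>C\<in>?N. 2 * card C)"
      by (rule split)
    moreover have "(\<Sum>C\<in>?C. 2 * card C) = 2 * (card V - 1)"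
      using comps_sum[OF fin, of E y] y fin by (simp add: sum_distrib_left[symmetric])
    ultimately have "3 * card ?D \<ge> 2 * (card V - 1) + card ?N"
      using s1 s2 s3 s4 by linarith
    moreover have "card ?D \<le> diss V E" using diss_ge[OF fin dD] .
    moreover have "card V \<ge> 1" using y fin by (auto simp: Suc_le_eq card_gt_0_iff)
    ultimately show False using a big by linarith
  qed
  then show ?thesis using m by (simp add: condc_def)
qed

lemma pendant:
  assumes t: "tree V E" and PV: "P \<subseteq> V" and cP: "card P = 3" and x: "x \<in> V" "x \<notin> P"
    and p0: "p0 \<in> P"
    and cut: "\<forall>p\<in>P. \<forall>q\<in>V. q \<notin> P \<longrightarrow> {p,q} \<in> E \<longrightarrow> p = p0 \<and> q = x"
    and pc: "\<forall>p\<in>P. reach_in E P p0 p"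
  shows "tree (V - P) {e\<in>E. e \<subseteq> V - P} \<and> (condc V E \<longrightarrow> condc (V - P) {e\<in>E. e \<subseteq> V - P})"
proof -
  define V' where "V' = V - P"
  define E' where "E' = {e\<in>E. e \<subseteq> V'}"
  have g: "graph V E" and conn: "connected_graph V E" and ac: "acyclic_graph V E"
    using t by (auto simp: tree_def)
  have fin: "finite V" using g by (simp add: graph_def)
  define f where "f = (\<lambda>z. if z \<in> P then x else z)"
  have fV: "\<And>z. z \<in> V \<Longrightarrow> f z \<in> V'" using x by (auto simp: f_def V'_def)
  have proj: "\<And>S'. S' \<subseteq> V' \<Longrightarrow> \<forall>p q. p \<in> V - (V' - S') \<longrightarrow> q \<in> V - (V' - S') \<longrightarrow> {p,q} \<in> E \<longrightarrow>
        f p = f q \<or> (f p \<in> S' \<and> f q \<in> S' \<and> {f p, f q} \<in> E)"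
  proof (intro allI impI)
    fix S' p q assume S': "S' \<subseteq> V'" and p: "p \<in> V - (V' - S')" and q: "q \<in> V - (V' - S')"
      and e: "{p,q} \<in> E"
    show "f p = f q \<or> (f p \<in> S' \<and> f q \<in> S' \<and> {f p, f q} \<in> E)"
    proof (cases "p \<in> P")
      case pP: True
      show ?thesis
      proof (cases "q \<in> P")
        case True then show ?thesis using pP by (simp add: f_def)
      next
        case False
        then have "q = x" using cut pP q e by auto
        then show ?thesis using pP False by (simp add: f_def)
      qed
    next
      case pP: False
      show ?thesis
      proof (cases "q \<in> P")
        case True
        have "{q,p} \<in> E" using e by (simp add: insert_commute)
        then have "p = x" using cut True p pP by auto
        then show ?thesis using pP True by (simp add: f_def)
      next
        case False
        then have "p \<in> S'" "q \<in> S'" using p q pP S' by (auto simp: V'_def)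
        then show ?thesis using pP False e by (simp add: f_def)
      qed
    qed
  qed
  have tree': "tree V' E'"
    unfolding tree_def
  proof (intro conjI)
    show "graph V' E'"
      unfolding graph_def
    proof (intro conjI ballI)
      show "finite V'" using fin by (simp add: V'_def)
      fix e assume e: "e \<in> E'"
      then obtain a b where "e = {a,b}" "a \<noteq> b" using g by (auto simp: graph_def E'_def)
      then show "\<exists>a b. e = {a, b} \<and> a \<noteq> b \<and> a \<in> V' \<and> b \<in> V'" using e by (auto simp: E'_def)
    qed
    show "acyclic_graph V' E'" using ac by (auto simp: acyclic_graph_def is_cycle_def E'_def V'_def)
    show "connected_graph V' E'"
      unfolding connected_graph_def
    proof (intro conjI ballI)
      show "V' \<noteq> {}" using x by (auto simp: V'_def)
      fix a b assume a: "a \<in> V'" and b: "b \<in> V'"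
      have "reach_in E V a b" using conn a b by (auto simp: connected_graph_def V'_def)
      moreover have "V - (V' - V') = V" by simp
      ultimately have "reach_in E V' (f a) (f b)" using reach_proj[of E V a b f V'] proj[of V'] by simp
      moreover have "f a = a" "f b = b" using a b by (auto simp: f_def V'_def)
      ultimately have "reach_in E V' a b" by simp
      then show "reach_in E' V' a b" using reach_restrictE[of V' V' E] by (simp add: E'_def)
    qed
  qed
  have condc': "condc V' E'" if c: "condc V E"
  proof -
    have cV: "card V' = card V - 3" using PV fin cP by (simp add: V'_def card_Diff_subset finite_subset[OF PV fin])
    have "card P \<le> card V" using PV fin by (rule card_mono[rotated])
    then have m: "card V' mod 3 = 0" using c cP cV by (auto simp: condc_def)
    have "\<forall>y\<in>V'. card {C \<in> components_minus V' E' y. card C mod 3 \<noteq> 0} \<le> 2"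
    proof
      fix y assume y: "y \<in> V'"
      define S where "S = V - {y}"
      define S' where "S' = V' - {y}"
      have yV: "y \<in> V" "y \<notin> P" using y by (auto simp: V'_def)
      have SS: "S' \<subseteq> S" "S' \<subseteq> V'" "P \<subseteq> S" using PV yV by (auto simp: S_def S'_def V'_def)
      have finS: "finite S" using fin by (simp add: S_def)
      have cm': "components_minus V' E' y = K E S' ` S'"
        unfolding comps_K E'_def S'_def K_def[abs_def]
        using reach_restrictE[of "V' - {y}" V' E] by auto
      have KI: "K E S z \<inter> V' = K E S' z" if z: "z \<in> S'" for z
      proof
        show "K E S' z \<subseteq> K E S z \<inter> V'"
        proof
          fix w assume w: "w \<in> K E S' z"
          have "K E S' z \<subseteq> S'" using z by (rule K_sub)
          then have "w \<in> V'" using w SS by auto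
          moreover have "reach_in E S z w" using w reach_mono[OF SS(1)] by (simp add: K_def)
          ultimately show "w \<in> K E S z \<inter> V'" by (simp add: K_def)
        qed
        show "K E S z \<inter> V' \<subseteq> K E S' z"
        proof
          fix w assume w: "w \<in> K E S z \<inter> V'"
          have r: "reach_in E S z w" using w by (simp add: K_def)
          have "V - (V' - S') = S" using y by (auto simp: S_def S'_def V'_def)
          moreover have "S' \<subseteq> V'" using y by (auto simp: S'_def)
          ultimately have "reach_in E S' (f z) (f w)" using reach_proj[of E S z w f S'] proj[of S'] r by simp
          moreover have "f z = z" "f w = w" using z w by (auto simp: f_def S'_def V'_def)
          ultimately show "w \<in> K E S' z" by (simp add: K_def)
        qed
      qed
      have Kmod: "card (K E S z) mod 3 = card (K E S' z) mod 3" if z: "z \<in> S'" for z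
      proof -
        have zS: "z \<in> S" using z SS by auto
        have KS: "K E S z \<subseteq> S" using zS by (rule K_sub)
        have finK: "finite (K E S z)" using KS finS by (rule finite_subset)
        have dec: "K E S z = K E S' z \<union> (K E S z \<inter> P)"
        proof -
          have "K E S z \<subseteq> V' \<union> P" using KS by (auto simp: S_def V'_def)
          then show ?thesis using KI[OF z] by blast
        qed
        have disj: "K E S' z \<inter> (K E S z \<inter> P) = {}" using KI[OF z] by (auto simp: V'_def)
        have finK': "finite (K E S' z)" using finK KI[OF z] by (metis finite_Int)
        have "K E S z \<inter> P = {} \<or> K E S z \<inter> P = P"
        proof (cases "K E S z \<inter> P = {}")
          case False
          then obtain p where p: "p \<in> K E S z" "p \<in> P" by blast
          have "P \<subseteq> K E S z"
          proof
            fix p' assume p': "p' \<in> P"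
            have "reach_in E S p0 p" "reach_in E S p0 p'"
              using pc p(2) p' reach_mono[OF SS(3)] by auto
            then have "reach_in E S p p'" by (meson reach_sym reach_trans)
            moreover have "reach_in E S z p" using p by (simp add: K_def)
            ultimately show "p' \<in> K E S z" by (simp add: K_def reach_trans[of E S z p p'])
          qed
          then show ?thesis by blast
        qed simp
        then have "card (K E S z \<inter> P) = 0 \<or> card (K E S z \<inter> P) = 3" using cP by auto
        moreover have "card (K E S z) = card (K E S' z) + card (K E S z \<inter> P)"
          using dec disj finK finK' by (metis card_Un_disjoint finite_Int)
        ultimately show ?thesis by auto
      qed
      let ?N = "{C \<in> components_minus V E y. card C mod 3 \<noteq> 0}"
      let ?N' = "{C \<in> components_minus V' E' y. card C mod 3 \<noteq> 0}"
      have sub: "?N' \<subseteq> (\<lambda>C. C \<inter> V') ` ?N"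
      proof
        fix C' assume C': "C' \<in> ?N'"
        then obtain z where z: "z \<in> S'" "C' = K E S' z" using cm' by auto
        have zS: "z \<in> V - {y}" using z SS by (auto simp: S_def)
        have "K E S z \<in> components_minus V E y" unfolding S_def by (rule comps_mem[OF zS])
        moreover have "card (K E S z) mod 3 \<noteq> 0" using Kmod[OF z(1)] C' z by simp
        ultimately have "K E S z \<in> ?N" by simp
        moreover have "C' = K E S z \<inter> V'" using KI[OF z(1)] z by simp
        ultimately show "C' \<in> (\<lambda>C. C \<inter> V') ` ?N" by blast
      qed
      have finN: "finite ?N" using comps_fin[OF fin, of E y] by simp
      have "card ?N' \<le> card ((\<lambda>C. C \<inter> V') ` ?N)" using sub finN by (intro card_mono) auto
      also have "\<dots> \<le> card ?N" using finN by (rule card_image_le)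
      also have "\<dots> \<le> 2" using c yV by (auto simp: condc_def)
      finally show "card ?N' \<le> 2" .
    qed
    then show ?thesis using m by (simp add: condc_def)
  qed
  show ?thesis using tree' condc' by (simp add: V'_def E'_def)
qed

lemma edges_split:
  assumes g: "graph V E" and PV: "P \<subseteq> V"
  shows "E = {e\<in>E. e \<subseteq> V - P} \<union> {{p,q} | p q. p \<in> P \<and> q \<in> nb E V p}"
proof
  show "E \<subseteq> {e\<in>E. e \<subseteq> V - P} \<union> {{p,q} | p q. p \<in> P \<and> q \<in> nb E V p}"
  proof
    fix e assume e: "e \<in> E"
    then obtain a b where ab: "e = {a,b}" "a \<in> V" "b \<in> V" using g by (force simp: graph_def)
    show "e \<in> {e\<in>E. e \<subseteq> V - P} \<union> {{p,q} | p q. p \<in> P \<and> q \<in> nb E V p}"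
    proof (cases "a \<in> P")
      case True
      then have "b \<in> nb E V a" using ab e by (simp add: nb_def)
      then show ?thesis using True ab by blast
    next
      case aP: False
      show ?thesis
      proof (cases "b \<in> P")
        case True
        then have "a \<in> nb E V b" using ab e by (simp add: nb_def insert_commute)
        moreover have "e = {b,a}" using ab by (simp add: insert_commute)
        ultimately show ?thesis using True by blast
      next
        case False
        then show ?thesis using aP ab e by auto
      qed
    qed
  qed
  show "{e\<in>E. e \<subseteq> V - P} \<union> {{p,q} | p q. p \<in> P \<and> q \<in> nb E V p} \<subseteq> E"
    by (auto simp: nb_def)
qed

lemma leaf_count:
  assumes fin: "finite V" and lf: "lf E" and c: "condc V E" and y: "y \<in> V"
    and Ls: "Ls \<subseteq> nb E V y" and lv: "\<forall>l\<in>Ls. nb E V l \<subseteq> {y}"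
  shows "card Ls \<le> 2"
proof -
  let ?N = "{C \<in> components_minus V E y. card C mod 3 \<noteq> 0}"
  have "(\<lambda>l. {l}) ` Ls \<subseteq> ?N"
  proof
    fix C assume "C \<in> (\<lambda>l. {l}) ` Ls"
    then obtain l where l: "l \<in> Ls" "C = {l}" by blast
    have lV: "l \<in> V - {y}" using l Ls lf_nb[OF lf, where S=V and a=y] by (auto simp: nb_def)
    have "K E (V - {y}) l = {l}"
    proof (rule K_closed_eq)
      show "\<forall>p\<in>{l}. \<forall>q\<in>V - {y}. {p, q} \<in> E \<longrightarrow> q \<in> {l}"
        using lv l by (auto simp: nb_def)
    qed (use lV in auto)
    then have "{l} \<in> components_minus V E y" using comps_mem[OF lV, of E] by simp
    then show "C \<in> ?N" using l by simp
  qed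
  moreover have "finite ?N" using comps_fin[OF fin, of E y] by simp
  ultimately have "card ((\<lambda>l. {l}) ` Ls) \<le> card ?N" by (rule card_mono[rotated])
  moreover have "card ((\<lambda>l. {l}) ` Ls) = card Ls" by (rule card_image) (simp add: inj_on_def)
  moreover have "card ?N \<le> 2" using c y by (simp add: condc_def)
  ultimately show ?thesis by simp
qed

lemma pq_mem: "p \<in> P \<Longrightarrow> q \<in> N p \<Longrightarrow> {p,q} \<in> {{p,q} | p q. p \<in> P \<and> q \<in> N p}"
  by blast

lemma base3:
  assumes g: "graph V E" and V: "V = {a,b,c}" and d: "a \<noteq> b" "b \<noteq> c" "a \<noteq> c"
    and na: "nb E V a = {b}" and nbb: "nb E V b = {a,c}" and nc: "nb E V c = {b}"
  shows "(V, E) \<in> calT"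
proof -
  have e: "E = {e\<in>E. e \<subseteq> V - V} \<union> {{p,q} | p q. p \<in> V \<and> q \<in> nb E V p}"
    using edges_split[OF g, of V] by simp
  have e1: "{e\<in>E. e \<subseteq> V - V} = {}" using g by (auto simp: graph_def)
  have e2: "{{p,q} | p q. p \<in> V \<and> q \<in> nb E V p} = {{a,b},{b,c}}"
    using na nbb nc V by (auto simp: insert_commute)
  have "E = {} \<union> {{a,b},{b,c}}" using e unfolding e1 e2 .
  then show ?thesis using V d by (simp add: calT.P3)
qed

lemma assemble_O1:
  fixes V :: "'a set"
  assumes t: "tree V E" and c: "condc V E"
    and IH: "\<And>(V'::'a set) E'. card V' < card V \<Longrightarrow> tree V' E' \<Longrightarrow> condc V' E' \<Longrightarrow> (V', E') \<in> calT"
    and V: "a \<in> V" "b \<in> V" "c \<in> V" "d \<in> V"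
    and dist: "a \<noteq> b" "a \<noteq> c" "a \<noteq> d" "b \<noteq> c" "b \<noteq> d" "c \<noteq> d"
    and na: "nb E V a = {b}" and nbb: "nb E V b = {a,c}" and nc: "nb E V c = {b,d}"
  shows "(V, E) \<in> calT"
proof -
  let ?P = "{a,b,c}"
  have g: "graph V E" and fin: "finite V" using t by (auto simp: tree_def graph_def)
  have PV: "?P \<subseteq> V" using V by auto
  have cP: "card ?P = 3" using dist by simp
  have cut: "\<forall>p\<in>?P. \<forall>q\<in>V. q \<notin> ?P \<longrightarrow> {p,q} \<in> E \<longrightarrow> p = c \<and> q = d"
  proof (intro ballI impI)
    fix p q assume p: "p \<in> ?P" and q: "q \<in> V" "q \<notin> ?P" and e: "{p,q} \<in> E"
    have "q \<in> nb E V p" using q e by (simp add: nb_def)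
    then show "p = c \<and> q = d" using p q na nbb nc by auto
  qed
  have ecb: "{c,b} \<in> E" and eba: "{b,a} \<in> E" using nc nbb by (auto simp: nb_def)
  have rcb: "reach_in E ?P c b" by (rule reach_step) (use ecb in auto)
  have rba: "reach_in E ?P b a" by (rule reach_step) (use eba in auto)
  have pc: "\<forall>p\<in>?P. reach_in E ?P c p" using rcb rba reach_trans[OF rcb rba] by auto
  have pend: "tree (V - ?P) {e\<in>E. e \<subseteq> V - ?P} \<and> (condc V E \<longrightarrow> condc (V - ?P) {e\<in>E. e \<subseteq> V - ?P})"
    by (rule pendant[OF t PV cP V(4) _ _ cut pc]) (use dist in auto)
  have "card (V - ?P) < card V"
    using PV fin cP V card_gt_0_iff[of V] by (auto simp: card_Diff_subset finite_subset[OF PV fin])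
  then have IH': "(V - ?P, {e\<in>E. e \<subseteq> V - ?P}) \<in> calT" using IH[where V'="V - ?P" and E'="{e\<in>E. e \<subseteq> V - ?P}"] pend c by simp
  have O: "((V - ?P) \<union> {a,b,c}, {e\<in>E. e \<subseteq> V - ?P} \<union> {{a,b},{b,c},{c,d}}) \<in> calT"
    by (rule calT.O1[OF IH']) (use dist V in auto)
  have "V - ?P \<union> {a,b,c} = V" using PV by auto
  moreover have "{e\<in>E. e \<subseteq> V - ?P} \<union> {{a,b},{b,c},{c,d}} = E"
  proof -
    have "{{p,q} | p q. p \<in> ?P \<and> q \<in> nb E V p} = {{a,b},{b,c},{c,d}}"
    proof
      show "{{p,q} | p q. p \<in> ?P \<and> q \<in> nb E V p} \<subseteq> {{a,b},{b,c},{c,d}}"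
        using na nbb nc by (auto simp: insert_commute)
      have "{a,b} \<in> {{p,q} | p q. p \<in> ?P \<and> q \<in> nb E V p}" by (rule pq_mem) (use na in auto)
      moreover have "{b,c} \<in> {{p,q} | p q. p \<in> ?P \<and> q \<in> nb E V p}" by (rule pq_mem) (use nbb in auto)
      moreover have "{c,d} \<in> {{p,q} | p q. p \<in> ?P \<and> q \<in> nb E V p}" by (rule pq_mem) (use nc in auto)
      ultimately show "{{a,b},{b,c},{c,d}} \<subseteq> {{p,q} | p q. p \<in> ?P \<and> q \<in> nb E V p}" by simp
    qed
    then show ?thesis using edges_split[OF g PV] by simp
  qed
  ultimately show ?thesis using O by simp
qed

lemma assemble_O2:
  fixes V :: "'a set"
  assumes t: "tree V E" and c: "condc V E"
    and IH: "\<And>(V'::'a set) E'. card V' < card V \<Longrightarrow> tree V' E' \<Longrightarrow> condc V' E' \<Longrightarrow> (V', E') \<in> calT"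
    and V: "a \<in> V" "b \<in> V" "l \<in> V" "c \<in> V"
    and dist: "a \<noteq> b" "a \<noteq> l" "a \<noteq> c" "b \<noteq> l" "b \<noteq> c" "l \<noteq> c"
    and na: "nb E V a = {b}" and nl: "nb E V l = {b}" and nbb: "nb E V b = {a,l,c}"
  shows "(V, E) \<in> calT"
proof -
  let ?P = "{b,a,l}"
  have g: "graph V E" and fin: "finite V" using t by (auto simp: tree_def graph_def)
  have PV: "?P \<subseteq> V" using V by auto
  have cP: "card ?P = 3" using dist by simp
  have cut: "\<forall>p\<in>?P. \<forall>q\<in>V. q \<notin> ?P \<longrightarrow> {p,q} \<in> E \<longrightarrow> p = b \<and> q = c"
  proof (intro ballI impI)
    fix p q assume p: "p \<in> ?P" and q: "q \<in> V" "q \<notin> ?P" and e: "{p,q} \<in> E"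
    have "q \<in> nb E V p" using q e by (simp add: nb_def)
    then show "p = b \<and> q = c" using p q na nbb nl by auto
  qed
  have eba: "{b,a} \<in> E" and ebl: "{b,l} \<in> E" using nbb by (auto simp: nb_def)
  have rba: "reach_in E ?P b a" by (rule reach_step) (use eba in auto)
  have rbl: "reach_in E ?P b l" by (rule reach_step) (use ebl in auto)
  have pc: "\<forall>p\<in>?P. reach_in E ?P b p" using rba rbl by auto
  have pend: "tree (V - ?P) {e\<in>E. e \<subseteq> V - ?P} \<and> (condc V E \<longrightarrow> condc (V - ?P) {e\<in>E. e \<subseteq> V - ?P})"
    by (rule pendant[OF t PV cP V(4) _ _ cut pc]) (use dist in auto)
  have "card (V - ?P) < card V"
    using PV fin cP V card_gt_0_iff[of V] by (auto simp: card_Diff_subset finite_subset[OF PV fin])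
  then have IH': "(V - ?P, {e\<in>E. e \<subseteq> V - ?P}) \<in> calT" using IH[where V'="V - ?P" and E'="{e\<in>E. e \<subseteq> V - ?P}"] pend c by simp
  have O: "((V - ?P) \<union> {b,a,l}, {e\<in>E. e \<subseteq> V - ?P} \<union> {{b,a},{b,l},{b,c}}) \<in> calT"
    by (rule calT.O2[OF IH']) (use dist V in auto)
  have "V - ?P \<union> {b,a,l} = V" using PV by auto
  moreover have "{e\<in>E. e \<subseteq> V - ?P} \<union> {{b,a},{b,l},{b,c}} = E"
  proof -
    have "{{p,q} | p q. p \<in> ?P \<and> q \<in> nb E V p} = {{b,a},{b,l},{b,c}}"
    proof
      show "{{p,q} | p q. p \<in> ?P \<and> q \<in> nb E V p} \<subseteq> {{b,a},{b,l},{b,c}}"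
        using na nbb nl by (auto simp: insert_commute)
      have "{b,a} \<in> {{p,q} | p q. p \<in> ?P \<and> q \<in> nb E V p}" by (rule pq_mem) (use nbb in auto)
      moreover have "{b,l} \<in> {{p,q} | p q. p \<in> ?P \<and> q \<in> nb E V p}" by (rule pq_mem) (use nbb in auto)
      moreover have "{b,c} \<in> {{p,q} | p q. p \<in> ?P \<and> q \<in> nb E V p}" by (rule pq_mem) (use nbb in auto)
      ultimately show "{{b,a},{b,l},{b,c}} \<subseteq> {{p,q} | p q. p \<in> ?P \<and> q \<in> nb E V p}" by simp
    qed
    then show ?thesis using edges_split[OF g PV] by simp
  qed
  ultimately show ?thesis using O by simp
qed

lemma card2_ex: "a \<in> L \<Longrightarrow> card L = 2 \<Longrightarrow> \<exists>l. l \<noteq> a \<and> L = {a, l}"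
proof -
  assume a: "a \<in> L" and c: "card L = 2"
  then have fL: "finite L" by (metis card.infinite zero_neq_numeral)
  have "card (L - {a}) = 1" using a c fL by simp
  then obtain l where "L - {a} = {l}" by (auto simp: card_1_singleton_iff)
  then show ?thesis using a by (intro exI[of _ l]) auto
qed

lemma card1_eq: "a \<in> L \<Longrightarrow> card L = 1 \<Longrightarrow> L = {a}"
proof -
  assume a: "a \<in> L" and c: "card L = 1"
  then obtain x where "L = {x}" by (auto simp: card_1_singleton_iff)
  then show "L = {a}" using a by simp
qed

lemma c_imp_b:
  fixes V :: "'a set"
  shows "tree V E \<Longrightarrow> condc V E \<Longrightarrow> (V, E) \<in> calT"
proof (induction "card V" arbitrary: V E rule: less_induct)
  case less
  have IH: "\<And>(V'::'a set) E'. card V' < card V \<Longrightarrow> tree V' E' \<Longrightarrow> condc V' E' \<Longrightarrow> (V', E') \<in> calT"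
    using less.hyps by blast
  have t: "tree V E" and c: "condc V E" by fact+
  have g: "graph V E" and conn: "connected_graph V E" and ac: "acyclic_graph V E"
    using t by (auto simp: tree_def)
  have fin: "finite V" using g by (simp add: graph_def)
  have lf: "lf E" using g by (rule graph_lf)
  have Vne: "V \<noteq> {}" using conn by (simp add: connected_graph_def)
  have c3: "card V \<ge> 3"
  proof -
    have "card V > 0" using fin Vne by (simp add: card_gt_0_iff)
    moreover have "card V mod 3 = 0" using c by (simp add: condc_def)
    ultimately show ?thesis by presburger
  qed
  obtain cs where l: "longest E V cs" and cne: "cs \<noteq> []" using longest_ex[OF fin Vne] by blast
  then obtain a rest where cs: "cs = a # rest" by (cases cs) auto
  have p: "pth E V cs" using l by (simp add: longest_def)
  have aV: "a \<in> V" using p cs by (simp add: pth_Cons)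
  show ?case
  proof (cases rest)
    case Nil
    have na: "nb E V a = {}" using F1[OF l[unfolded cs] ac lf] Nil by auto
    have "{a} = V"
      by (rule conn_closed[OF conn, where x=a]) (use aV na in \<open>auto simp: nb_def\<close>)
    then have "card V = 1" by auto
    with c3 show ?thesis by simp
  next
    case (Cons b rest2)
    note l2 = l[unfolded cs Cons]
    have p2: "pth E V (a # b # rest2)" using p cs Cons by simp
    have bV: "b \<in> V" and ab: "a \<noteq> b" and eab: "{a,b} \<in> E" and anr: "a \<notin> set rest2"
      using p2 by (auto simp: pth_Cons)
    have "nb E V a \<subseteq> {b}"
    proof
      fix u assume "u \<in> nb E V a"
      from F1[OF l2 ac lf this] show "u \<in> {b}" by simp
    qed
    moreover have "b \<in> nb E V a" using eab bV by (simp add: nb_def)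
    ultimately have na: "nb E V a = {b}" by blast
    define L where "L = nb E V b - (if rest2 = [] then {} else {hd rest2})"
    have leaves: "\<forall>x\<in>L. nb E V x = {b}"
    proof
      fix x assume x: "x \<in> L"
      have "nb E V x \<subseteq> {b}"
      proof (cases "x = a")
        case True then show ?thesis using na by simp
      next
        case False then show ?thesis using F2[OF l2 ac lf, of x] x by (auto simp: L_def split: if_splits)
      qed
      moreover have "x \<in> nb E V b" using x by (simp add: L_def)
      then have "b \<in> nb E V x" using bV by (rule nb_sym)
      ultimately show "nb E V x = {b}" by auto
    qed
    have aL: "a \<in> L" using eab aV anr by (auto simp: L_def nb_def insert_commute)
    have bL: "b \<notin> L" using lf_nb[OF lf] by (auto simp: L_def)
    have LV: "L \<subseteq> nb E V b" by (auto simp: L_def)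
    have finL: "finite L" using fin by (auto simp: L_def nb_def)
    have cL: "card L \<le> 2"
    proof (rule leaf_count[OF fin lf c bV LV])
      show "\<forall>l\<in>L. nb E V l \<subseteq> {b}" using leaves by simp
    qed
    have cL1: "card L \<ge> 1" using aL finL by (metis One_nat_def Suc_leI card_gt_0_iff empty_iff)
    have LsubV: "L \<subseteq> V" using LV by (auto simp: nb_def)
    show ?thesis
    proof (cases rest2)
      case Nil
      have nbb: "nb E V b = L" using Nil by (simp add: L_def)
      have "insert b L = V"
      proof (rule conn_closed[OF conn, where x=b])
        show "insert b L \<subseteq> V" using bV LsubV by auto
        show "\<forall>p\<in>insert b L. \<forall>q\<in>V. {p, q} \<in> E \<longrightarrow> q \<in> insert b L"
        proof (intro ballI impI)
          fix p q assume p: "p \<in> insert b L" and q: "q \<in> V" and e: "{p,q} \<in> E"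
          then have "q \<in> nb E V p" by (simp add: nb_def)
          then show "q \<in> insert b L" using p nbb leaves by auto
        qed
      qed simp
      then have "card V = card L + 1" using bL finL by (metis card_insert_disjoint Suc_eq_plus1)
      then have "card L = 2" using cL c3 by simp
      then obtain l where l: "l \<noteq> a" "L = {a, l}" using card2_ex[OF aL] by blast
      have V3: "V = {a,b,l}" using \<open>insert b L = V\<close> l by auto
      show ?thesis
        by (rule base3[OF g V3 ab]) (use l bL leaves nbb in auto)
    next
      case (Cons c rest3)
      note l3 = l2[unfolded Cons]
      have p3: "pth E V (a # b # c # rest3)" using p2 Cons by simp
      have cV: "c \<in> V" and bc: "b \<noteq> c" and ac': "a \<noteq> c" and ebc: "{b,c} \<in> E"
        using p3 by (auto simp: pth_Cons)
      have cnb: "c \<in> nb E V b" using ebc cV by (simp add: nb_def)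
      have Ldef: "L = nb E V b - {c}" using Cons by (simp add: L_def)
      show ?thesis
      proof (cases "card L = 2")
        case True
        then obtain l where l: "l \<noteq> a" "L = {a, l}" using card2_ex[OF aL] by blast
        have nbb: "nb E V b = {a, l, c}" using Ldef l cnb by auto
        have lV: "l \<in> V" using l LsubV by auto
        have lc: "l \<noteq> c" using l Ldef by auto
        have lb: "l \<noteq> b" using l bL by auto
        have al: "a \<noteq> l" using l(1) by simp
        have bl: "b \<noteq> l" using lb by simp
        have nl: "nb E V l = {b}" using leaves l by auto
        show ?thesis
          by (rule assemble_O2[OF less.prems(1) c IH aV bV lV cV ab al ac' bl bc lc na nl nbb])
      next
        case False
        then have "card L = 1" using cL cL1 by simp
        then have L1: "L = {a}" using card1_eq[OF aL] by simp
        have nbb: "nb E V b = {a, c}" using Ldef L1 cnb by auto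
        define M where "M = nb E V c - {b} - (if rest3 = [] then {} else {hd rest3})"
        show ?thesis
        proof (cases "M = {}")
          case False
          then obtain w where wM: "w \<in> M" by blast
          have wnc: "w \<in> nb E V c" and wb: "w \<noteq> b" and wr: "rest3 \<noteq> [] \<longrightarrow> w \<noteq> hd rest3"
            using wM by (auto simp: M_def split: if_splits)
          have F3': "\<And>z. z \<in> nb E V w \<Longrightarrow> z \<noteq> c \<Longrightarrow> nb E V z \<subseteq> {w}"
            using F3[OF l3 ac lf wnc wb wr] by blast
          have wV: "w \<in> V" using wnc by (simp add: nb_def)
          have wc: "w \<noteq> c" using wnc lf_nb[OF lf, where S=V and a=c] by auto
          have wa: "w \<noteq> a"
          proof
            assume "w = a"
            then have "c \<in> nb E V a" using nb_sym[OF wnc cV] by simp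
            then show False using na bc by auto
          qed
          have cw: "c \<in> nb E V w" using nb_sym[OF wnc cV] .
          define Lw where "Lw = nb E V w - {c}"
          have lw: "\<forall>z\<in>Lw. nb E V z = {w}"
          proof
            fix z assume z: "z \<in> Lw"
            then have "nb E V z \<subseteq> {w}" using F3' by (auto simp: Lw_def)
            moreover have "z \<in> nb E V w" using z by (simp add: Lw_def)
            then have "w \<in> nb E V z" using wV by (rule nb_sym)
            ultimately show "nb E V z = {w}" by auto
          qed
          have finLw: "finite Lw" using fin by (auto simp: Lw_def nb_def)
          have cLw: "card Lw \<le> 2"
          proof (rule leaf_count[OF fin lf c wV])
            show "Lw \<subseteq> nb E V w" by (simp add: Lw_def)
            show "\<forall>l\<in>Lw. nb E V l \<subseteq> {w}" using lw by simp
          qed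
          define S where "S = V - {c}"
          have Ka: "K E S a = {a, b}"
          proof (rule K_closed_eq)
            show "{a, b} \<subseteq> S" using aV bV ac' bc by (auto simp: S_def)
            show "\<forall>p\<in>{a, b}. \<forall>q\<in>S. {p, q} \<in> E \<longrightarrow> q \<in> {a, b}"
            proof (intro ballI impI)
              fix p q assume p: "p \<in> {a,b}" and q: "q \<in> S" and e: "{p,q} \<in> E"
              then have "q \<in> nb E V p" by (simp add: nb_def S_def)
              then show "q \<in> {a,b}" using p q na nbb by (auto simp: S_def)
            qed
            have "reach_in E S a b" by (rule reach_step) (use aV bV ac' bc eab in \<open>auto simp: S_def\<close>)
            then show "\<forall>z\<in>{a, b}. reach_in E S a z" by auto
          qed simp
          have aS: "a \<in> V - {c}" using aV ac' by simp
          have wS: "w \<in> V - {c}" using wV wc by simp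
          have Cab: "{a,b} \<in> components_minus V E c" using comps_mem[OF aS, of E] Ka by (simp add: S_def)
          have cab: "card {a,b} = 2" using ab by simp
          show ?thesis
          proof (cases "card Lw = 2")
            case True
            then obtain w1 w2 where w12: "w1 \<noteq> w2" "Lw = {w1, w2}" by (auto simp: card_2_iff)
            have nbw: "nb E V w = {w1, w2, c}" using w12 cw by (auto simp: Lw_def)
            have w1V: "w1 \<in> V" and w2V: "w2 \<in> V" using nbw by (auto simp: nb_def)
            have w1c: "w1 \<noteq> c" and w2c: "w2 \<noteq> c" using w12 by (auto simp: Lw_def)
            have ww: "w1 \<noteq> w" "w2 \<noteq> w" using nbw lf_nb[OF lf, where S=V and a=w] by auto
            have n1: "nb E V w1 = {w}" and n2: "nb E V w2 = {w}" using lw w12 by auto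
            have d1: "w1 \<noteq> w" and d2: "w \<noteq> w2" using ww by auto
            show ?thesis
              by (rule assemble_O2[OF less.prems(1) c IH w1V wV w2V cV d1 w12(1) w1c d2 wc w2c n1 n2 nbw])
          next
            case False
            have lt: "card Lw = 0 \<or> card Lw = 1" using False cLw by linarith
            then show ?thesis
            proof
              assume "card Lw = 0"
              then have "Lw = {}" using finLw by simp
              then have nbw: "nb E V w = {c}" using cw by (auto simp: Lw_def)
              have Kw: "K E S w = {w}"
              proof (rule K_closed_eq)
                show "\<forall>p\<in>{w}. \<forall>q\<in>S. {p, q} \<in> E \<longrightarrow> q \<in> {w}"
                  using nbw by (auto simp: nb_def S_def)
              qed (use wS in \<open>auto simp: S_def\<close>)
              have Cw: "{w} \<in> components_minus V E c" using comps_mem[OF wS, of E] Kw by (simp add: S_def)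
              have "{a,b} \<noteq> {w}" using wa by auto
              from sum_two[OF fin c cV Cab Cw this] cab show ?thesis by simp
            next
              assume "card Lw = 1"
              then obtain w' where w': "Lw = {w'}" by (auto simp: card_1_singleton_iff)
              have nbw: "nb E V w = {c, w'}" using w' cw by (auto simp: Lw_def)
              have nbw': "nb E V w' = {w}" using lw w' by auto
              have w'c: "w' \<noteq> c" using w' by (auto simp: Lw_def)
              have w'V: "w' \<in> V" using nbw by (auto simp: nb_def)
              have eww': "{w,w'} \<in> E" using nbw by (auto simp: nb_def)
              have w'w: "w' \<noteq> w" using nbw' lf_nb[OF lf, where S=V and a=w'] by auto
              have Kw: "K E S w = {w, w'}"
              proof (rule K_closed_eq)
                show "{w, w'} \<subseteq> S" using wV w'V wc w'c by (auto simp: S_def)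
                show "\<forall>p\<in>{w, w'}. \<forall>q\<in>S. {p, q} \<in> E \<longrightarrow> q \<in> {w, w'}"
                proof (intro ballI impI)
                  fix p q assume p: "p \<in> {w,w'}" and q: "q \<in> S" and e: "{p,q} \<in> E"
                  then have "q \<in> nb E V p" by (simp add: nb_def S_def)
                  then show "q \<in> {w,w'}" using p q nbw nbw' by (auto simp: S_def)
                qed
                have "reach_in E S w w'" by (rule reach_step) (use wV w'V wc w'c eww' in \<open>auto simp: S_def\<close>)
                then show "\<forall>z\<in>{w, w'}. reach_in E S w z" by auto
              qed simp
              have Cw: "{w,w'} \<in> components_minus V E c" using comps_mem[OF wS, of E] Kw by (simp add: S_def)
              have "{a,b} \<noteq> {w,w'}" using wa wb by auto
              from sum_two[OF fin c cV Cab Cw this] cab w'w show ?thesis by simp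
            qed
          qed
        next
          case True
          have cnb2: "b \<in> nb E V c" using nb_sym[OF cnb bV] .
          show ?thesis
          proof (cases rest3)
            case Nil
            have nc: "nb E V c = {b}" using True Nil cnb2 by (auto simp: M_def)
            have V3: "{a,b,c} = V"
            proof (rule conn_closed[OF conn, where x=a])
              show "{a,b,c} \<subseteq> V" using aV bV cV by auto
              show "\<forall>p\<in>{a,b,c}. \<forall>q\<in>V. {p, q} \<in> E \<longrightarrow> q \<in> {a,b,c}"
              proof (intro ballI impI)
                fix p q assume p: "p \<in> {a,b,c}" and q: "q \<in> V" and e: "{p,q} \<in> E"
                then have "q \<in> nb E V p" by (simp add: nb_def)
                then show "q \<in> {a,b,c}" using p na nbb nc by auto
              qed
            qed simp
            show ?thesis by (rule base3[OF g V3[symmetric] ab bc ac' na nbb nc])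
          next
            case (Cons d rest4)
            have p4: "pth E V (a # b # c # d # rest4)" using p3 Cons by simp
            have dV: "d \<in> V" and ecd: "{c,d} \<in> E" and dist: "a \<noteq> d" "b \<noteq> d" "c \<noteq> d"
              using p4 by (auto simp: pth_Cons)
            have dnc: "d \<in> nb E V c" using ecd dV by (simp add: nb_def)
            have nc: "nb E V c = {b, d}" using True Cons cnb2 dnc by (auto simp: M_def)
            show ?thesis
              by (rule assemble_O1[OF less.prems(1) c IH aV bV cV dV ab ac' dist(1) bc dist(2) dist(3) na nbb nc])
          qed
        qed
      qed
    qed
  qed
qed

lemma real_eq3: "(real d = 2 * real n / 3) \<longleftrightarrow> 3 * d = 2 * n"
proof -
  have "(real d = 2 * real n / 3) \<longleftrightarrow> real (3 * d) = real (2 * n)" by auto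
  also have "\<dots> \<longleftrightarrow> 3 * d = 2 * n" by (rule of_nat_eq_iff)
  finally show ?thesis .
qed

theorem theorem2:
  fixes V :: "'a set" and E :: "'a set set"
  assumes "tree V E"
  shows "(real (diss V E) = 2 * real (card V) / 3 \<longleftrightarrow> (V, E) \<in> calT)
       \<and> ((V, E) \<in> calT \<longleftrightarrow>
            (card V mod 3 = 0 \<and>
             (\<forall>y\<in>V. card {C \<in> components_minus V E y. card C mod 3 \<noteq> 0} \<le> 2)))"
proof -
  have ba: "(V, E) \<in> calT \<Longrightarrow> 3 * diss V E = 2 * card V" using calT_diss by blast
  have ac: "3 * diss V E = 2 * card V \<Longrightarrow> condc V E" using a_imp_c[OF assms] by blast
  have cb: "condc V E \<Longrightarrow> (V, E) \<in> calT" using c_imp_b[OF assms] by blast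
  have eq: "real (diss V E) = 2 * real (card V) / 3 \<longleftrightarrow> 3 * diss V E = 2 * card V" by (rule real_eq3)
  have 1: "real (diss V E) = 2 * real (card V) / 3 \<longleftrightarrow> (V, E) \<in> calT"
  proof
    assume "real (diss V E) = 2 * real (card V) / 3"
    then have "3 * diss V E = 2 * card V" using eq by simp
    then show "(V, E) \<in> calT" by (intro cb ac)
  next
    assume "(V, E) \<in> calT"
    then have "3 * diss V E = 2 * card V" by (rule ba)
    then show "real (diss V E) = 2 * real (card V) / 3" using eq by simp
  qed
  have 2: "(V, E) \<in> calT \<longleftrightarrow> condc V E"
  proof
    assume "(V, E) \<in> calT"
    then show "condc V E" by (intro ac ba)
  next
    assume "condc V E" then show "(V, E) \<in> calT" by (rule cb)
  qed
  have 3: "condc V E \<longleftrightarrow> (card V mod 3 = 0 \<and>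
             (\<forall>y\<in>V. card {C \<in> components_minus V E y. card C mod 3 \<noteq> 0} \<le> 2))"
    by (simp add: condc_def)
  show ?thesis using 1 2 3 by simp
qed

end
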